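(* Let $N\ge 2$ and $L\ge 1$ be integers, and let $R_{12}(\xi_1,\xi_2)$ be an $R$-matrix acting on $V_1\otimes V_2$, $V_j\cong\mathbb{C}^N$, of the form $$R_{12}(\xi_1,\xi_2)=\sum_{i=1}^N a_i(\xi_1,\xi_2)\,e^{(ii)}_1\otimes e^{(ii)}_2+\sum_{i\neq j} b_{ij}(\xi_1,\xi_2)\,e^{(ii)}_1\otimes e^{(jj)}_2+\sum_{i\ne j} c_{ij}(\xi_1,\xi_2)\,e^{(ij)}_1\otimes e^{(ji)}_2,$$ with arbitrary (complex-valued) weights $a_i,b_{ij},c_{ij}$, the $a_i$ nonvanishing, satisfying the Yang–Baxter equation $R_{12}(\xi_1,\xi_2)R_{13}(\xi_1,\xi_3)R_{23}(\xi_2,\xi_3)=R_{23}(\xi_2,\xi_3)R_{13}(\xi_1,\xi_3)R_{12}(\xi_1,\xi_2)$ and the unitarity condition $R_{12}(\xi_1,\xi_2)R_{21}(\xi_2,\xi_1)=\mathcal I_1\otimes\mathcal I_2$. Define $F_{1\dots L}=F_{1\dots L}(\xi_1,\dots,\xi_L)$ on $V_1\otimes\cdots\otimes V_L$ by $F_{1\dots L}=\mathcal N_{1\dots L}\mathcal F_{1\dots L}$, where $$\mathcal N_{1\dots L}=\mathcal N_{(L-1)L}\,\mathcal N_{L-2,(L-1)L}\cdots\mathcal N_{1,2\dots L},\qquad \mathcal N_{i,(i+1)\dots L}=\mathcal N_{iL}\mathcal N_{i(L-1)}\cdots\mathcal N_{i(i+1)},$$ $$\mathcal N_{ij}=\mathcal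 I_i\otimes\mathcal I_j-\sum_{k=1}^N e^{(kk)}_i\otimes e^{(kk)}_j+\sum_{k=1}^N\sqrt{a_k(\xi_i,\xi_j)}\,e^{(kk)}_i\otimes e^{(kk)}_j,$$ and $$\mathcal F_{1\dots L}=\sum_{\sigma\in S_L}\ \sum^{*}_{1\le\alpha_{\sigma(1)},\dots,\alpha_{\sigma(L)}\le N}\ \bigotimes_{i=1}^L e^{(\alpha_i\alpha_i)}_i\ R^{\{\sigma\}}_{1\dots L},$$ where the starred sum runs over all sequences with $\alpha_{\sigma(i)}\le\alpha_{\sigma(i+1)}$ if $\sigma(i)<\sigma(i+1)$ and $\alpha_{\sigma(i)}<\alpha_{\sigma(i+1)}$ if $\sigma(i)>\sigma(i+1)$, for $i=1,\dots,L-1$. Then for every permutation $\sigma\in S_L$ the factorization condition $$F_{\sigma(1)\dots\sigma(L)}(\xi_{\sigma(1)},\dots,\xi_{\sigma(L)})\,R^{\{\sigma\}}_{1\dots L}(\xi_1,\dots,\xi_L)=F_{1\dots L}(\xi_1,\dots,\xi_L)$$ holds.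
   Context: $e^{(\alpha\beta)}_j$ denotes the $N\times N$ Weyl matrix (1 in entry $(\alpha,\beta)$, 0 elsewhere) acting on $V_j$, and $\mathcal I_j$ the identity on $V_j$. $R_{jk}(\xi_j,\xi_k)$ denotes the $R$-matrix acting on the factors $V_j\otimes V_k$ with parameters $\xi_j,\xi_k$. $P_{\alpha(\alpha+1)}$ is the permutation operator exchanging the factors $V_\alpha,V_{\alpha+1}$. For $\sigma\in S_L$ written in a minimal decomposition into adjacent transpositions $\sigma=\sigma_{\alpha_p(\alpha_p+1)}\cdots\sigma_{\alpha_1(\alpha_1+1)}$, one sets $R^{\{\sigma\}}_{1\dots L}=P^{\{\sigma\}}_{1\dots L}\hat R^{\{\sigma^{-1}\}}_{1\dots L}$ with $P^{\{\sigma\}}_{1\dots L}=P_{\alpha_p(\alpha_p+1)}\cdots P_{\alpha_1(\alpha_1+1)}$, $\hat R^{\{\sigma^{-1}\}}_{1\dots L}=\hat R_{\alpha_1}\hat R_{\alpha_2}\cdots\hat R_{\alpha_p}$ and $\hat R_{\alpha}=P_{\alpha(\alpha+1)}R_{\alpha(\alpha+1)}(\xi_\alpha,\xi_{\alpha+1})$; $R^{\{\mathrm{id}\}}$ is the identity. For an operator $X_{1\dots L}(\xi_1,\dots,\xi_L)$, $X_{\sigma(1)\dots\sigma(L)}(\xi_{\sigma(1)},\dots,\xi_{\sigma(L)})$ denotes the same operator with its spaces and parameters relabelled by $\sigma$, i.e. $P^{\{\sigma\}}_{1\dots L}X_{1\dots L}P^{\{\sigma^{-1}\}}_{1\dots L}$.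 The square roots are chosen so that $\sqrt{a_k(\xi_i,\xi_j)}\sqrt{a_k(\xi_j,\xi_i)}=1$ (compatible with unitarity, which gives $a_k(\xi_i,\xi_j)a_k(\xi_j,\xi_i)=1$). *)

theory Defs
  imports Complex_Main "HOL-Combinatorics.Permutations"
begin

text \<open>Operators on V_0 \<otimes> ... \<otimes> V_(L-1), V_j = C^N, are represented by their
  matrices, indexed by basis tuples (lists of length L with entries < N).
  Sites and colours are 0-based.\<close>

type_synonym op = "nat list \<Rightarrow> nat list \<Rightarrow> complex"

definition tuples :: "nat \<Rightarrow> nat \<Rightarrow> nat list set" where
  "tuples N L = {xs. length xs = L \<and> (\<forall>x\<in>set xs. x < N)}"

definition mmul :: "nat \<Rightarrow> nat \<Rightarrow> op \<Rightarrow> op \<Rightarrow> op" where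
  "mmul N L A B xs ys = (\<Sum>zs\<in>tuples N L. A xs zs * B zs ys)"

definition idop :: op where
  "idop xs ys = (if xs = ys then 1 else 0)"

definition opeq :: "nat \<Rightarrow> nat \<Rightarrow> op \<Rightarrow> op \<Rightarrow> bool" where
  "opeq N L A B \<longleftrightarrow> (\<forall>xs\<in>tuples N L. \<forall>ys\<in>tuples N L. A xs ys = B xs ys)"

definition mprod :: "nat \<Rightarrow> nat \<Rightarrow> op list \<Rightarrow> op" where
  "mprod N L As = foldr (mmul N L) As idop"

text \<open>Embedding of a two-site matrix M (entry M \<alpha> \<beta> \<alpha>' \<beta>' for the matrix element
  ((\<alpha>,\<beta>),(\<alpha>',\<beta>')) of V_j \<otimes> V_k) acting on sites j (first factor) and k.\<close>
definition emb :: "nat \<Rightarrow> nat \<Rightarrow> nat \<Rightarrow> (nat \<Rightarrow> nat \<Rightarrow> nat \<Rightarrow> nat \<Rightarrow> complex) \<Rightarrow> op" where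
  "emb L j k M xs ys =
     (if (\<forall>m<L. m \<noteq> j \<longrightarrow> m \<noteq> k \<longrightarrow> xs ! m = ys ! m)
      then M (xs ! j) (xs ! k) (ys ! j) (ys ! k) else 0)"

definition Rmat :: "(nat \<Rightarrow> 'p \<Rightarrow> 'p \<Rightarrow> complex) \<Rightarrow> (nat \<Rightarrow> nat \<Rightarrow> 'p \<Rightarrow> 'p \<Rightarrow> complex)
    \<Rightarrow> (nat \<Rightarrow> nat \<Rightarrow> 'p \<Rightarrow> 'p \<Rightarrow> complex) \<Rightarrow> 'p \<Rightarrow> 'p \<Rightarrow> nat \<Rightarrow> nat \<Rightarrow> nat \<Rightarrow> nat \<Rightarrow> complex" where
  "Rmat a b c x y \<alpha> \<beta> \<alpha>' \<beta>' =
     (if \<alpha> = \<beta> \<and> \<alpha>' = \<alpha> \<and> \<beta>' = \<beta> then a \<alpha> x y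
      else if \<alpha>' = \<alpha> \<and> \<beta>' = \<beta> then b \<alpha> \<beta> x y
      else if \<alpha>' = \<beta> \<and> \<beta>' = \<alpha> then c \<alpha> \<beta> x y
      else 0)"

definition Rop :: "(nat \<Rightarrow> 'p \<Rightarrow> 'p \<Rightarrow> complex) \<Rightarrow> (nat \<Rightarrow> nat \<Rightarrow> 'p \<Rightarrow> 'p \<Rightarrow> complex)
    \<Rightarrow> (nat \<Rightarrow> nat \<Rightarrow> 'p \<Rightarrow> 'p \<Rightarrow> complex) \<Rightarrow> nat \<Rightarrow> nat \<Rightarrow> nat \<Rightarrow> 'p \<Rightarrow> 'p \<Rightarrow> op" where
  "Rop a b c L j k x y = emb L j k (Rmat a b c x y)"

definition Pswap :: "nat \<Rightarrow> nat \<Rightarrow> nat \<Rightarrow> op" where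
  "Pswap L j k = emb L j k (\<lambda>\<alpha> \<beta> \<alpha>' \<beta>'. if \<alpha>' = \<beta> \<and> \<beta>' = \<alpha> then 1 else 0)"

text \<open>P^{\<sigma>}: the tensor-factor permutation operator sending the factor at site i
  to site \<sigma> i (a homomorphism, so P^{\<sigma>} = P_{\<alpha>_p(\<alpha>_p+1)} ... P_{\<alpha>_1(\<alpha>_1+1)}).\<close>
definition Pmat :: "nat \<Rightarrow> (nat \<Rightarrow> nat) \<Rightarrow> op" where
  "Pmat L \<sigma> xs ys = (if \<forall>i<L. xs ! (\<sigma> i) = ys ! i then 1 else 0)"

definition adjsw :: "nat \<Rightarrow> nat \<Rightarrow> nat" where
  "adjsw \<beta> i = (if i = \<beta> then Suc \<beta> else if i = Suc \<beta> then \<beta> else i)"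

text \<open>\<beta>s = [\<beta>_1,...,\<beta>_k] is a decomposition of \<sigma> = s_{\<beta>_1} \<circ> ... \<circ> s_{\<beta>_k} into adjacent
  transpositions (so \<beta>s = [\<alpha>_p, ..., \<alpha>_1] in the paper's notation).\<close>
definition is_decomp :: "nat \<Rightarrow> (nat \<Rightarrow> nat) \<Rightarrow> nat list \<Rightarrow> bool" where
  "is_decomp L \<sigma> \<beta>s \<longleftrightarrow> (\<forall>\<beta>\<in>set \<beta>s. Suc \<beta> < L) \<and> foldr (\<lambda>\<beta> f. adjsw \<beta> \<circ> f) \<beta>s id = \<sigma>"

definition min_decomp :: "nat \<Rightarrow> (nat \<Rightarrow> nat) \<Rightarrow> nat list" where
  "min_decomp L \<sigma> = (SOME \<beta>s. is_decomp L \<sigma> \<beta>s \<and> (\<forall>\<gamma>s. is_decomp L \<sigma> \<gamma>s \<longrightarrow> length \<beta>s \<le> length \<gamma>s))"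

definition Rhat :: "nat \<Rightarrow> nat \<Rightarrow> (nat \<Rightarrow> 'p \<Rightarrow> 'p \<Rightarrow> complex) \<Rightarrow> (nat \<Rightarrow> nat \<Rightarrow> 'p \<Rightarrow> 'p \<Rightarrow> complex)
    \<Rightarrow> (nat \<Rightarrow> nat \<Rightarrow> 'p \<Rightarrow> 'p \<Rightarrow> complex) \<Rightarrow> (nat \<Rightarrow> 'p) \<Rightarrow> nat \<Rightarrow> op" where
  "Rhat N L a b c \<xi> \<beta> = mmul N L (Pswap L \<beta> (Suc \<beta>)) (Rop a b c L \<beta> (Suc \<beta>) (\<xi> \<beta>) (\<xi> (Suc \<beta>)))"

text \<open>\<hat>R^{\<sigma>^{-1}} = \<hat>R_{\<alpha>_1} ... \<hat>R_{\<alpha>_p}, read as a braid product: each factor uses the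
  parameters currently sitting at its two positions (the rightmost factor acts first,
  with \<xi>, and each \<hat>R_\<beta> exchanges the parameters at positions \<beta>, \<beta>+1).\<close>
fun hatprod :: "nat \<Rightarrow> nat \<Rightarrow> (nat \<Rightarrow> 'p \<Rightarrow> 'p \<Rightarrow> complex) \<Rightarrow> (nat \<Rightarrow> nat \<Rightarrow> 'p \<Rightarrow> 'p \<Rightarrow> complex)
    \<Rightarrow> (nat \<Rightarrow> nat \<Rightarrow> 'p \<Rightarrow> 'p \<Rightarrow> complex) \<Rightarrow> (nat \<Rightarrow> 'p) \<Rightarrow> nat list \<Rightarrow> op" where
  "hatprod N L a b c \<xi> [] = idop"
| "hatprod N L a b c \<xi> (\<beta> # \<beta>s) =
     mmul N L (hatprod N L a b c (\<xi> \<circ> adjsw \<beta>) \<beta>s) (Rhat N L a b c \<xi> \<beta>)"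

text \<open>R^{\<sigma>}_{1...L}(\<xi>) = P^{\<sigma>} \<hat>R^{\<sigma>^{-1}}.\<close>
definition Rsig :: "nat \<Rightarrow> nat \<Rightarrow> (nat \<Rightarrow> 'p \<Rightarrow> 'p \<Rightarrow> complex) \<Rightarrow> (nat \<Rightarrow> nat \<Rightarrow> 'p \<Rightarrow> 'p \<Rightarrow> complex)
    \<Rightarrow> (nat \<Rightarrow> nat \<Rightarrow> 'p \<Rightarrow> 'p \<Rightarrow> complex) \<Rightarrow> (nat \<Rightarrow> 'p) \<Rightarrow> (nat \<Rightarrow> nat) \<Rightarrow> op" where
  "Rsig N L a b c \<xi> \<sigma> = mmul N L (Pmat L \<sigma>) (hatprod N L a b c \<xi> (min_decomp L \<sigma>))"

text \<open>\<N>_{ij} = I - sum_k e^(kk)_i e^(kk)_j + sum_k sqrt(a_k(\<xi>_i,\<xi>_j)) e^(kk)_i e^(kk)_j,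
  with sq k x y the chosen square root of a k x y.\<close>
definition Nij :: "nat \<Rightarrow> (nat \<Rightarrow> 'p \<Rightarrow> 'p \<Rightarrow> complex) \<Rightarrow> (nat \<Rightarrow> 'p) \<Rightarrow> nat \<Rightarrow> nat \<Rightarrow> op" where
  "Nij L sq \<xi> i j = emb L i j (\<lambda>\<alpha> \<beta> \<alpha>' \<beta>'. if \<alpha>' = \<alpha> \<and> \<beta>' = \<beta>
       then (if \<alpha> = \<beta> then sq \<alpha> (\<xi> i) (\<xi> j) else 1) else 0)"

definition Nrow :: "nat \<Rightarrow> nat \<Rightarrow> (nat \<Rightarrow> 'p \<Rightarrow> 'p \<Rightarrow> complex) \<Rightarrow> (nat \<Rightarrow> 'p) \<Rightarrow> nat \<Rightarrow> op" where
  "Nrow N L sq \<xi> i = mprod N L (map (\<lambda>j. Nij L sq \<xi> i j) (rev [Suc i..<L]))"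

definition Ncal :: "nat \<Rightarrow> nat \<Rightarrow> (nat \<Rightarrow> 'p \<Rightarrow> 'p \<Rightarrow> complex) \<Rightarrow> (nat \<Rightarrow> 'p) \<Rightarrow> op" where
  "Ncal N L sq \<xi> = mprod N L (map (\<lambda>i. Nrow N L sq \<xi> i) (rev [0..<L - 1]))"

definition starcond :: "nat \<Rightarrow> (nat \<Rightarrow> nat) \<Rightarrow> nat list \<Rightarrow> bool" where
  "starcond L \<sigma> \<alpha> \<longleftrightarrow> (\<forall>i. Suc i < L \<longrightarrow>
      (if \<sigma> i < \<sigma> (Suc i) then \<alpha> ! (\<sigma> i) \<le> \<alpha> ! (\<sigma> (Suc i))
       else \<alpha> ! (\<sigma> i) < \<alpha> ! (\<sigma> (Suc i))))"

definition proj :: "nat list \<Rightarrow> op" where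
  "proj \<alpha> xs ys = (if xs = \<alpha> \<and> ys = \<alpha> then 1 else 0)"

definition Fcal :: "nat \<Rightarrow> nat \<Rightarrow> (nat \<Rightarrow> 'p \<Rightarrow> 'p \<Rightarrow> complex) \<Rightarrow> (nat \<Rightarrow> nat \<Rightarrow> 'p \<Rightarrow> 'p \<Rightarrow> complex)
    \<Rightarrow> (nat \<Rightarrow> nat \<Rightarrow> 'p \<Rightarrow> 'p \<Rightarrow> complex) \<Rightarrow> (nat \<Rightarrow> 'p) \<Rightarrow> op" where
  "Fcal N L a b c \<xi> xs ys =
     (\<Sum>\<sigma>\<in>{\<sigma>. \<sigma> permutes {0..<L}}. \<Sum>\<alpha>\<in>{\<alpha>\<in>tuples N L. starcond L \<sigma> \<alpha>}.
        mmul N L (proj \<alpha>) (Rsig N L a b c \<xi> \<sigma>) xs ys)"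

definition Fop :: "nat \<Rightarrow> nat \<Rightarrow> (nat \<Rightarrow> 'p \<Rightarrow> 'p \<Rightarrow> complex) \<Rightarrow> (nat \<Rightarrow> nat \<Rightarrow> 'p \<Rightarrow> 'p \<Rightarrow> complex)
    \<Rightarrow> (nat \<Rightarrow> nat \<Rightarrow> 'p \<Rightarrow> 'p \<Rightarrow> complex) \<Rightarrow> (nat \<Rightarrow> 'p \<Rightarrow> 'p \<Rightarrow> complex) \<Rightarrow> (nat \<Rightarrow> 'p) \<Rightarrow> op" where
  "Fop N L a b c sq \<xi> = mmul N L (Ncal N L sq \<xi>) (Fcal N L a b c \<xi>)"

text \<open>Relabelling X_{\<sigma>(1)...\<sigma>(L)}(\<xi>_{\<sigma>(1)},...,\<xi>_{\<sigma>(L)}) = P^{\<sigma>} X(\<xi> \<circ> \<sigma>) P^{\<sigma>^{-1}}.\<close>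
definition relabel :: "nat \<Rightarrow> nat \<Rightarrow> (nat \<Rightarrow> nat) \<Rightarrow> op \<Rightarrow> op" where
  "relabel N L \<sigma> X = mmul N L (Pmat L \<sigma>) (mmul N L X (Pmat L (inv \<sigma>)))"

end

theory Submission
  imports Defs "HOL-Library.Product_Lexorder"
begin

definition cl :: "nat \<Rightarrow> nat \<Rightarrow> op \<Rightarrow> op" where
  "cl N L A xs ys = (if xs \<in> tuples N L \<and> ys \<in> tuples N L then A xs ys else 0)"

lemma finite_tuples[simp]: "finite (tuples N L)"
proof -
  have "tuples N L \<subseteq> {xs. set xs \<subseteq> {0..<N} \<and> length xs = L}"
    by (auto simp: tuples_def)
  moreover have "finite {xs. set xs \<subseteq> {0..<N} \<and> length xs = L}"
    by (rule finite_lists_length_eq) simp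
  ultimately show ?thesis by (rule finite_subset)
qed

lemma mmul_assoc: "mmul N L (mmul N L A B) C = mmul N L A (mmul N L B C)"
  unfolding mmul_def
  by (auto simp: fun_eq_iff sum_distrib_left sum_distrib_right mult.assoc intro: sum.swap)

lemma cl_mmul: "cl N L (mmul N L A B) = mmul N L (cl N L A) (cl N L B)"
  unfolding cl_def mmul_def fun_eq_iff by (auto intro!: sum.cong)

lemma opeq_cl: "opeq N L A B \<longleftrightarrow> cl N L A = cl N L B"
  unfolding opeq_def cl_def fun_eq_iff by auto

lemma cl_cl[simp]: "cl N L (cl N L A) = cl N L A"
  unfolding cl_def fun_eq_iff by auto

lemma cl_mmul_l: "cl N L (mmul N L (cl N L A) B) = cl N L (mmul N L A B)"
  by (simp add: cl_mmul)
lemma cl_mmul_r: "cl N L (mmul N L A (cl N L B)) = cl N L (mmul N L A B)"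
  by (simp add: cl_mmul)

lemma mmul_cl_is_cl: "mmul N L (cl N L A) (cl N L B) = cl N L (mmul N L A B)"
  by (simp add: cl_mmul)

lemma sum_single:
  assumes "finite S" "z \<in> S" "\<And>x. x \<in> S \<Longrightarrow> x \<noteq> z \<Longrightarrow> f x = 0"
  shows "sum f S = f z"
proof -
  have "sum f S = f z + sum f (S - {z})" using assms by (simp add: sum.remove)
  also have "sum f (S - {z}) = 0" using assms by (intro sum.neutral) auto
  finally show ?thesis by simp
qed

lemma idop_left: "mmul N L (cl N L idop) (cl N L A) = cl N L A"
proof (rule ext, rule ext)
  fix xs ys
  show "mmul N L (cl N L idop) (cl N L A) xs ys = cl N L A xs ys"
  proof (cases "xs \<in> tuples N L")
    case True
    then show ?thesis unfolding mmul_def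
      by (subst sum_single[where z=xs]) (auto simp: cl_def idop_def)
  next
    case False
    then show ?thesis unfolding mmul_def by (auto simp: cl_def)
  qed
qed

lemma idop_right: "mmul N L (cl N L A) (cl N L idop) = cl N L A"
proof (rule ext, rule ext)
  fix xs ys
  show "mmul N L (cl N L A) (cl N L idop) xs ys = cl N L A xs ys"
  proof (cases "ys \<in> tuples N L")
    case True
    then show ?thesis unfolding mmul_def
      by (subst sum_single[where z=ys]) (auto simp: cl_def idop_def)
  next
    case False
    then show ?thesis unfolding mmul_def by (auto simp: cl_def)
  qed
qed

definition perm :: "nat list \<Rightarrow> nat \<Rightarrow> nat" where
  "perm w = foldr (\<lambda>\<beta> f. adjsw \<beta> \<circ> f) w id"

lemma perm_Nil[simp]: "perm [] = id" by (simp add: perm_def)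
lemma perm_Cons[simp]: "perm (b # w) = adjsw b \<circ> perm w" by (simp add: perm_def)
lemma perm_append: "perm (u @ v) = perm u \<circ> perm v"
  by (induction u) (auto simp: perm_def)

lemma adjsw_adjsw[simp]: "adjsw b (adjsw b x) = x"
  by (simp add: adjsw_def)
lemma adjsw_o_adjsw[simp]: "adjsw b \<circ> adjsw b = id"
  by (simp add: fun_eq_iff)
lemma adjsw_comm: "Suc b < g \<Longrightarrow> adjsw b \<circ> adjsw g = adjsw g \<circ> adjsw b"
  by (auto simp: fun_eq_iff adjsw_def)
lemma adjsw_braid: "adjsw b \<circ> adjsw (Suc b) \<circ> adjsw b = adjsw (Suc b) \<circ> adjsw b \<circ> adjsw (Suc b)"
  by (auto simp: fun_eq_iff adjsw_def)

lemma adjsw_permutes: "Suc b < L \<Longrightarrow> adjsw b permutes {0..<L}"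
  apply (rule bij_imp_permutes)
   apply (rule bij_betw_byWitness[where f'="adjsw b"])
  by (auto simp: adjsw_def)

lemma perm_permutes: "\<forall>b\<in>set w. Suc b < L \<Longrightarrow> perm w permutes {0..<L}"
  by (induction w) (auto simp: permutes_id intro: permutes_compose adjsw_permutes)

definition cfun :: "nat \<Rightarrow> nat \<Rightarrow> nat \<Rightarrow> nat" where
  "cfun k m j = (if j = m then k else if k \<le> j \<and> j < m then Suc j else j)"
definition dfun :: "nat \<Rightarrow> nat \<Rightarrow> nat \<Rightarrow> nat" where
  "dfun k m j = (if j = k then m else if k < j \<and> j \<le> m then j - 1 else j)"

primrec canon :: "nat \<Rightarrow> (nat \<Rightarrow> nat) \<Rightarrow> nat list" where
  "canon 0 p = []"
| "canon (Suc m) p = [p m..<m] @ canon m (dfun (p m) m \<circ> p)"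

lemma perm_upt: "k \<le> m \<Longrightarrow> perm [k..<m] = cfun k m"
proof (induction m)
  case 0 then show ?case by (auto simp: cfun_def fun_eq_iff)
next
  case (Suc m)
  show ?case
  proof (cases "k = Suc m")
    case True then show ?thesis by (auto simp: cfun_def fun_eq_iff)
  next
    case False
    then have "k \<le> m" using Suc by simp
    then show ?thesis using Suc.IH
      by (auto simp: perm_append cfun_def fun_eq_iff adjsw_def)
  qed
qed

lemma cfun_dfun: "k \<le> m \<Longrightarrow> cfun k m \<circ> dfun k m = id"
  by (auto simp: cfun_def dfun_def fun_eq_iff)
lemma dfun_cfun: "k \<le> m \<Longrightarrow> dfun k m \<circ> cfun k m = id"
  by (auto simp: cfun_def dfun_def fun_eq_iff)

lemma dfun_permutes: "k \<le> m \<Longrightarrow> dfun k m permutes {0..<Suc m}"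
  apply (rule bij_imp_permutes)
   apply (rule bij_betw_byWitness[where f'="cfun k m"])
  using cfun_dfun[of k m] dfun_cfun[of k m]
  by (auto simp: fun_eq_iff cfun_def dfun_def)

lemma permutes_fix_last:
  assumes "p permutes {0..<Suc m}" "p m = m"
  shows "p permutes {0..<m}"
  using assms unfolding permutes_def
  by (metis atLeastLessThan_iff less_Suc_eq)

lemma canon_step_permutes:
  assumes "p permutes {0..<Suc m}"
  shows "dfun (p m) m \<circ> p permutes {0..<m}"
proof -
  have k: "p m \<le> m" using permutes_in_image[OF assms, of m] by simp
  show ?thesis
    by (rule permutes_fix_last) (auto intro: permutes_compose assms dfun_permutes k simp: dfun_def)
qed

lemma perm_canon: "p permutes {0..<m} \<Longrightarrow> perm (canon m p) = p"
proof (induction m arbitrary: p)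
  case 0 then show ?case by (simp add: permutes_empty)
next
  case (Suc m)
  have k: "p m \<le> m" using permutes_in_image[OF Suc.prems, of m] by simp
  have "perm (canon (Suc m) p) = cfun (p m) m \<circ> (dfun (p m) m \<circ> p)"
    using Suc.IH[OF canon_step_permutes[OF Suc.prems]] k
    by (simp add: perm_append perm_upt del: o_apply)
  also have "\<dots> = p" using cfun_dfun[OF k] by (simp add: comp_assoc[symmetric])
  finally show ?case .
qed

lemma canon_valid: "\<forall>b\<in>set (canon m p). Suc b < m"
proof (induction m arbitrary: p)
  case (Suc m)
  then show ?case by (auto dest: Suc_lessD)
qed simp

locale wrep =
  fixes mul :: "'a \<Rightarrow> 'a \<Rightarrow> 'a" and one :: 'a and r :: "(nat \<Rightarrow> 'p) \<Rightarrow> nat \<Rightarrow> 'a"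
    and L :: nat and S :: "'a set"
  assumes assoc: "mul (mul x y) z = mul x (mul y z)"
    and closed: "x \<in> S \<Longrightarrow> y \<in> S \<Longrightarrow> mul x y \<in> S"
    and one_S: "one \<in> S" and r_S: "r \<xi> b \<in> S"
    and lunit: "x \<in> S \<Longrightarrow> mul one x = x"
    and runit: "x \<in> S \<Longrightarrow> mul x one = x"
    and U: "Suc b < L \<Longrightarrow> mul (r (\<xi> \<circ> adjsw b) b) (r \<xi> b) = one"
    and C: "Suc b < g \<Longrightarrow> Suc g < L \<Longrightarrow>
        mul (r (\<xi> \<circ> adjsw b) g) (r \<xi> b) = mul (r (\<xi> \<circ> adjsw g) b) (r \<xi> g)"
    and B: "Suc (Suc b) < L \<Longrightarrow>
        mul (r (\<xi> \<circ> adjsw b \<circ> adjsw (Suc b)) b) (mul (r (\<xi> \<circ> adjsw b) (Suc b)) (r \<xi> b))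
      = mul (r (\<xi> \<circ> adjsw (Suc b) \<circ> adjsw b) (Suc b)) (mul (r (\<xi> \<circ> adjsw (Suc b)) b) (r \<xi> (Suc b)))"
begin

fun hp :: "(nat \<Rightarrow> 'p) \<Rightarrow> nat list \<Rightarrow> 'a" where
  "hp \<xi> [] = one"
| "hp \<xi> (b # w) = mul (hp (\<xi> \<circ> adjsw b) w) (r \<xi> b)"

lemma hp_S: "hp \<xi> w \<in> S"
  by (induction w arbitrary: \<xi>) (auto intro: closed one_S r_S)

lemma hp_append: "hp \<xi> (u @ v) = mul (hp (\<xi> \<circ> perm u) v) (hp \<xi> u)"
  by (induction u arbitrary: \<xi>) (auto simp: runit hp_S assoc comp_assoc)

definition weq :: "nat list \<Rightarrow> nat list \<Rightarrow> bool" where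
  "weq u v \<longleftrightarrow> perm u = perm v \<and> (\<forall>\<xi>. hp \<xi> u = hp \<xi> v)"

lemma weq_refl[simp]: "weq u u" by (simp add: weq_def)
lemma weq_sym: "weq u v \<Longrightarrow> weq v u" by (simp add: weq_def)
lemma weq_trans[trans]: "weq u v \<Longrightarrow> weq v w \<Longrightarrow> weq u w" by (simp add: weq_def)

lemma weq_app: "weq u v \<Longrightarrow> weq (p @ u @ q) (p @ v @ q)"
  unfolding weq_def by (auto simp: perm_append hp_append)

lemma weq_appL: "weq u v \<Longrightarrow> weq (p @ u) (p @ v)"
  using weq_app[of u v p "[]"] by simp
lemma weq_appR: "weq u v \<Longrightarrow> weq (u @ q) (v @ q)"
  using weq_app[of u v "[]" q] by simp
lemma weq_Cons: "weq u v \<Longrightarrow> weq (b # u) (b # v)"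
  using weq_appL[of u v "[b]"] by simp

lemma weq_U: "Suc b < L \<Longrightarrow> weq [b, b] []"
  unfolding weq_def by (auto simp: lunit r_S U)

lemma weq_C: assumes "Suc b < g" "Suc g < L" shows "weq [b, g] [g, b]"
proof -
  have "perm [b, g] = perm [g, b]" using adjsw_comm[OF assms(1)] by simp
  moreover have "hp \<xi> [b, g] = hp \<xi> [g, b]" for \<xi>
    using C[OF assms, of \<xi>] by (simp add: lunit r_S)
  ultimately show ?thesis by (simp add: weq_def)
qed

lemma weq_B: assumes "Suc (Suc b) < L" shows "weq [b, Suc b, b] [Suc b, b, Suc b]"
proof -
  have p: "perm [b, Suc b, b] = perm [Suc b, b, Suc b]"
    using adjsw_braid[of b] by (simp add: comp_assoc)
  have "hp \<xi> [b, Suc b, b] = hp \<xi> [Suc b, b, Suc b]" for \<xi>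
  proof -
    have "hp \<xi> [b, Suc b, b] = mul (mul (r (\<xi> \<circ> adjsw b \<circ> adjsw (Suc b)) b) (r (\<xi> \<circ> adjsw b) (Suc b))) (r \<xi> b)"
      by (simp add: lunit r_S)
    also have "\<dots> = mul (r (\<xi> \<circ> adjsw (Suc b) \<circ> adjsw b) (Suc b)) (mul (r (\<xi> \<circ> adjsw (Suc b)) b) (r \<xi> (Suc b)))"
      unfolding assoc by (rule B[OF assms])
    also have "\<dots> = hp \<xi> [Suc b, b, Suc b]"
      by (simp add: lunit r_S assoc)
    finally show ?thesis .
  qed
  then show ?thesis using p by (simp add: weq_def)
qed

lemma weq_C': "Suc b < L \<Longrightarrow> Suc g < L \<Longrightarrow> (Suc b < g \<or> Suc g < b) \<Longrightarrow> weq [b, g] [g, b]"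
  using weq_C weq_sym by blast

lemma weq_comm:
  assumes "\<forall>g\<in>set w. (Suc b < g \<or> Suc g < b) \<and> Suc g < L" "Suc b < L"
  shows "weq (w @ [b]) (b # w)"
  using assms
proof (induction w)
  case Nil then show ?case by simp
next
  case (Cons g w)
  have "weq ((g # w) @ [b]) (g # b # w)"
    using Cons by (simp add: weq_Cons)
  also have "weq (g # b # w) (b # g # w)"
    using weq_appR[OF weq_C'[of g b], of w] Cons.prems by auto
  finally show ?case .
qed

lemma upt_split3: "k \<le> j \<Longrightarrow> Suc (Suc j) \<le> m \<Longrightarrow> [k..<m] = [k..<j] @ [j, Suc j] @ [Suc (Suc j)..<m]"
proof -
  assume a: "k \<le> j" "Suc (Suc j) \<le> m"
  have "[k..<m] = [k..<j] @ [j..<m]" using a upt_add_eq_append[of k j "m - j"] by simp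
  also have "[j..<m] = j # Suc j # [Suc (Suc j)..<m]" using a
    by (simp add: upt_conv_Cons)
  finally show ?thesis by simp
qed

lemma weq_left:
  assumes "k \<le> j" "Suc (Suc j) \<le> m" "m < L"
  shows "weq ([k..<m] @ [j]) (Suc j # [k..<m])"
proof -
  have "weq ([k..<m] @ [j]) ([k..<j] @ [j, Suc j] @ ([Suc (Suc j)..<m] @ [j]))"
    using upt_split3[OF assms(1,2)] by simp
  also have "weq \<dots> ([k..<j] @ [j, Suc j] @ (j # [Suc (Suc j)..<m]))"
    using assms by (intro weq_appL weq_comm) auto
  also have "([k..<j] @ [j, Suc j] @ (j # [Suc (Suc j)..<m])) = [k..<j] @ [j, Suc j, j] @ [Suc (Suc j)..<m]"
    by simp
  also have "weq \<dots> ([k..<j] @ [Suc j, j, Suc j] @ [Suc (Suc j)..<m])"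
    using assms by (intro weq_app weq_B) auto
  also have "([k..<j] @ [Suc j, j, Suc j] @ [Suc (Suc j)..<m]) = ([k..<j] @ [Suc j]) @ [j, Suc j] @ [Suc (Suc j)..<m]"
    by simp
  also have "weq \<dots> ((Suc j # [k..<j]) @ [j, Suc j] @ [Suc (Suc j)..<m])"
    using assms by (intro weq_appR weq_comm) auto
  also have "((Suc j # [k..<j]) @ [j, Suc j] @ [Suc (Suc j)..<m]) = Suc j # [k..<m]"
    using upt_split3[OF assms(1,2)] by simp
  finally show ?thesis .
qed


lemma dfun_adj1: "Suc b \<le> m \<Longrightarrow> dfun (Suc b) m \<circ> adjsw b = dfun b m"
  by (auto simp: fun_eq_iff dfun_def adjsw_def)
lemma dfun_adj2: "Suc b \<le> m \<Longrightarrow> dfun b m \<circ> adjsw b = dfun (Suc b) m"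
  by (auto simp: fun_eq_iff dfun_def adjsw_def)
lemma dfun_adj3: "Suc b < k \<Longrightarrow> k \<le> m \<Longrightarrow> dfun k m \<circ> adjsw b = adjsw b \<circ> dfun k m"
  by (auto simp: fun_eq_iff dfun_def adjsw_def)
lemma dfun_adj4: "k < b \<Longrightarrow> b < m \<Longrightarrow> dfun k m \<circ> adjsw b = adjsw (b - 1) \<circ> dfun k m"
  by (auto simp: fun_eq_iff dfun_def adjsw_def)

lemma canon_id: "canon m id = []"
proof (induction m)
  case (Suc m)
  have "dfun m m = id" by (auto simp: fun_eq_iff dfun_def)
  then show ?case using Suc by simp
qed simp

lemma K: "m \<le> L \<Longrightarrow> p permutes {0..<m} \<Longrightarrow> Suc b < m \<Longrightarrow>
   weq (canon m (adjsw b \<circ> p)) (b # canon m p)"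
proof (induction m arbitrary: p b)
  case 0 then show ?case by simp
next
  case (Suc m)
  define k where "k = p m"
  have k: "k \<le> m" using permutes_in_image[OF Suc.prems(2), of m] by (simp add: k_def)
  define p' where "p' = dfun k m \<circ> p"
  have p': "p' permutes {0..<m}" unfolding p'_def k_def by (rule canon_step_permutes[OF Suc.prems(2)])
  have bm: "b < m" using Suc.prems by simp
  have cp: "canon (Suc m) p = [k..<m] @ canon m p'" by (simp add: k_def p'_def)
  have ca: "canon (Suc m) (adjsw b \<circ> p) = [adjsw b k..<m] @ canon m (dfun (adjsw b k) m \<circ> adjsw b \<circ> p)"
    by (simp add: k_def comp_assoc)
  consider "k = b" | "k = Suc b" | "Suc b < k" | "k < b" by linarith
  then show ?case
  proof cases
    case 1
    have e1: "canon (Suc m) (adjsw b \<circ> p) = [Suc b..<m] @ canon m p'"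
      using ca 1 dfun_adj1[of b m] bm by (simp add: adjsw_def p'_def)
    have e2: "[b, b] @ [Suc b..<m] @ canon m p' = b # canon (Suc m) p"
      using cp 1 bm by (simp add: upt_conv_Cons)
    have w: "weq ([Suc b..<m] @ canon m p') ([b, b] @ [Suc b..<m] @ canon m p')"
      using weq_appR[OF weq_U[of b], of "[Suc b..<m] @ canon m p'"] Suc.prems
      by (auto intro: weq_sym)
    show ?thesis unfolding e1 e2[symmetric] by (rule w)
  next
    case 2
    have "canon (Suc m) (adjsw b \<circ> p) = [b..<m] @ canon m p'"
      using ca 2 dfun_adj2[of b m] k by (simp add: adjsw_def p'_def)
    also have "\<dots> = b # canon (Suc m) p"
      using cp 2 bm by (simp add: upt_conv_Cons)
    finally show ?thesis by (simp only: weq_refl)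
  next
    case 3
    have "canon (Suc m) (adjsw b \<circ> p) = [k..<m] @ canon m (adjsw b \<circ> p')"
      using ca 3 dfun_adj3[of b k m] k by (simp add: adjsw_def p'_def comp_assoc)
    also have "weq \<dots> ([k..<m] @ (b # canon m p'))"
      using Suc.prems 3 k by (intro weq_appL Suc.IH p') auto
    also have "[k..<m] @ (b # canon m p') = ([k..<m] @ [b]) @ canon m p'" by simp
    also have "weq \<dots> ((b # [k..<m]) @ canon m p')"
      using Suc.prems 3 by (intro weq_appR weq_comm) auto
    also have "(b # [k..<m]) @ canon m p' = b # canon (Suc m) p" using cp by simp
    finally show ?thesis .
  next
    case 4
    have "canon (Suc m) (adjsw b \<circ> p) = [k..<m] @ canon m (adjsw (b - 1) \<circ> p')"
      using ca 4 dfun_adj4[of k b m] bm by (simp add: adjsw_def p'_def comp_assoc)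
    also have "weq \<dots> ([k..<m] @ ((b - 1) # canon m p'))"
      using Suc.prems 4 k by (intro weq_appL Suc.IH p') auto
    also have "[k..<m] @ ((b - 1) # canon m p') = ([k..<m] @ [b - 1]) @ canon m p'" by simp
    also have "weq \<dots> ((Suc (b - 1) # [k..<m]) @ canon m p')"
      using Suc.prems 4 by (intro weq_appR weq_left) auto
    also have "(Suc (b - 1) # [k..<m]) @ canon m p' = b # canon (Suc m) p" using cp 4 by simp
    finally show ?thesis .
  qed
qed

lemma hp_canon: "\<forall>b\<in>set w. Suc b < L \<Longrightarrow> hp \<xi> w = hp \<xi> (canon L (perm w))"
proof (induction w arbitrary: \<xi>)
  case Nil then show ?case using canon_id[of L] by (simp add: id_def)
next
  case (Cons b w)
  have "hp \<xi> (b # w) = hp \<xi> (b # canon L (perm w))"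
    using Cons by simp
  also have "\<dots> = hp \<xi> (canon L (adjsw b \<circ> perm w))"
    using K[of L "perm w" b] perm_permutes[of w L] Cons.prems unfolding weq_def by auto
  finally show ?case by (simp add: comp_def)
qed

end

definition key :: "nat list \<Rightarrow> nat \<Rightarrow> nat \<times> nat" where
  "key y i = (y ! i, i)"

lemma starcond_step: "starcond L t y \<Longrightarrow> Suc i < L \<Longrightarrow> key y (t i) < key y (t (Suc i))"
  unfolding starcond_def key_def
  by (erule allE[of _ i]) (auto split: if_splits simp: le_less)

lemma starcond_chain: "starcond L t y \<Longrightarrow> i < j \<Longrightarrow> j < L \<Longrightarrow> key y (t i) < key y (t j)"
proof (induction j)
  case 0 then show ?case by simp
next
  case (Suc j)
  have s: "key y (t j) < key y (t (Suc j))" using starcond_step[OF Suc.prems(1)] Suc.prems by simp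
  show ?case
  proof (cases "i = j")
    case True then show ?thesis using s by simp
  next
    case False
    then have "key y (t i) < key y (t j)" using Suc by simp
    then show ?thesis using s by (rule less_trans)
  qed
qed

lemma key_less: "key y a < key y b \<longleftrightarrow> y ! a < y ! b \<or> (y ! a = y ! b \<and> a < b)"
  unfolding key_def by (auto simp: le_less)

lemma key_to_starcond:
  assumes "\<And>i. Suc i < L \<Longrightarrow> key y (t i) < key y (t (Suc i))"
  shows "starcond L t y"
  unfolding starcond_def
proof (intro allI impI)
  fix i assume "Suc i < L"
  then have "key y (t i) < key y (t (Suc i))" by (rule assms)
  then show "if t i < t (Suc i) then y ! t i \<le> y ! t (Suc i) else y ! t i < y ! t (Suc i)"
    unfolding key_less by auto
qed

lemma starcond_sorted:
  assumes "starcond L t y" "t permutes {0..<L}" "length y = L"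
  shows "sorted (permute_list t y)"
proof -
  have "\<forall>i<L. t i < L" using permutes_in_image[OF assms(2)] by auto
  then show ?thesis
    unfolding sorted_iff_nth_mono_less permute_list_def using assms(3)
    using starcond_chain[OF assms(1)] by (fastforce simp: key_less)
qed

lemma starcond_unique:
  assumes "t permutes {0..<L}" "t' permutes {0..<L}" "starcond L t y" "starcond L t' y"
  shows "t = t'"
proof -
  define xs where "xs = map (key y \<circ> t) [0..<L]"
  define ys where "ys = map (key y \<circ> t') [0..<L]"
  have sx: "sorted_wrt (<) xs" unfolding xs_def sorted_wrt_iff_nth_less
    using starcond_chain[OF assms(3)] by auto
  have sy: "sorted_wrt (<) ys" unfolding ys_def sorted_wrt_iff_nth_less
    using starcond_chain[OF assms(4)] by auto
  have "set xs = key y ` t ` {0..<L}" unfolding xs_def by (auto simp: image_comp)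
  also have "t ` {0..<L} = {0..<L}" using assms(1) by (rule permutes_image)
  also have "{0..<L} = t' ` {0..<L}" using assms(2) by (rule permutes_image[symmetric])
  also have "key y ` t' ` {0..<L} = set ys" unfolding ys_def by (auto simp: image_comp)
  finally have "set xs = set ys" .
  then have "xs = ys" using sx sy by (simp add: strict_sorted_iff sorted_distinct_set_unique)
  have "\<forall>i<L. key y (t i) = key y (t' i)"
  proof (intro allI impI)
    fix i assume "i < L"
    then have "xs ! i = ys ! i" using \<open>xs = ys\<close> by simp
    then show "key y (t i) = key y (t' i)" using \<open>i < L\<close> by (simp add: xs_def ys_def)
  qed
  then have "\<forall>i<L. t i = t' i" by (simp add: key_def)
  moreover have "\<forall>i. i \<ge> L \<longrightarrow> t i = i \<and> t' i = i"
    using assms(1,2) by (auto simp: permutes_def)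
  ultimately show ?thesis by (metis ext not_le)
qed

lemma starcond_exists:
  assumes "length y = L"
  shows "\<exists>t. t permutes {0..<L} \<and> starcond L t y"
proof -
  define ks where "ks = sort_key (key y) [0..<L]"
  have lk: "length ks = L" and dk: "distinct ks" and sk: "set ks = {0..<L}"
    and so: "sorted (map (key y) ks)" by (auto simp: ks_def)
  define t where "t i = (if i < L then ks ! i else i)" for i
  have bij: "bij_betw ((!) ks) {..<L} {0..<L}"
    using bij_betw_nth[OF dk] lk sk by simp
  have "bij_betw t {..<L} {0..<L}"
    using bij by (subst bij_betw_cong[where g = "(!) ks"]) (auto simp: t_def)
  then have "bij_betw t {0..<L} {0..<L}" by (simp add: lessThan_atLeast0)
  then have tp: "t permutes {0..<L}"
    by (rule bij_imp_permutes) (auto simp: t_def)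
  have "starcond L t y"
  proof (rule key_to_starcond)
    fix i assume i: "Suc i < L"
    have "(map (key y) ks) ! i \<le> (map (key y) ks) ! Suc i"
      using so i lk unfolding sorted_iff_nth_mono_less by simp
    then have "key y (ks ! i) \<le> key y (ks ! Suc i)" using i lk by simp
    moreover have "ks ! i \<noteq> ks ! Suc i" using dk i lk by (simp add: nth_eq_iff_index_eq)
    then have "key y (ks ! i) \<noteq> key y (ks ! Suc i)" by (simp add: key_def)
    ultimately show "key y (t i) < key y (t (Suc i))" using i by (simp add: t_def)
  qed
  then show ?thesis using tp by blast
qed

lemma tuplesD: "xs \<in> tuples N L \<Longrightarrow> length xs = L" "xs \<in> tuples N L \<Longrightarrow> i < L \<Longrightarrow> xs ! i < N"
  by (auto simp: tuples_def)

lemma tuplesI: "length xs = L \<Longrightarrow> (\<And>i. i < L \<Longrightarrow> xs ! i < N) \<Longrightarrow> xs \<in> tuples N L"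
  by (auto simp: tuples_def in_set_conv_nth)

lemma tuples_eqI: "xs \<in> tuples N L \<Longrightarrow> ys \<in> tuples N L \<Longrightarrow> (\<And>i. i < L \<Longrightarrow> xs ! i = ys ! i) \<Longrightarrow> xs = ys"
  by (auto simp: tuples_def intro: nth_equalityI)

definition tr :: "nat \<Rightarrow> nat \<Rightarrow> nat \<Rightarrow> nat" where
  "tr j k i = (if i = j then k else if i = k then j else i)"

definition swp :: "nat \<Rightarrow> nat \<Rightarrow> nat list \<Rightarrow> nat list" where
  "swp j k xs = map (\<lambda>i. xs ! tr j k i) [0..<length xs]"

lemma swp_length[simp]: "length (swp j k xs) = length xs" by (simp add: swp_def)
lemma swp_nth: "i < length xs \<Longrightarrow> swp j k xs ! i = xs ! tr j k i" by (simp add: swp_def)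
lemma tr_tr[simp]: "tr j k (tr j k i) = i" by (simp add: tr_def)
lemma tr_less: "j < L \<Longrightarrow> k < L \<Longrightarrow> i < L \<Longrightarrow> tr j k i < L" by (simp add: tr_def)

lemma swp_T: "xs \<in> tuples N L \<Longrightarrow> j < L \<Longrightarrow> k < L \<Longrightarrow> swp j k xs \<in> tuples N L"
  by (rule tuplesI) (auto simp: swp_nth tuplesD tr_less)

lemma swp_swp: "j < length xs \<Longrightarrow> k < length xs \<Longrightarrow> swp j k (swp j k xs) = xs"
  by (rule nth_equalityI) (auto simp: swp_nth tr_less)

lemma Pswap_eq:
  assumes "j < L" "k < L" "j \<noteq> k" "length xs = L" "length zs = L"
  shows "Pswap L j k xs zs = (if zs = swp j k xs then 1 else 0)"
proof -
  have l: "length xs = L" "length zs = L" using assms by auto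
  have "(\<forall>m<L. m \<noteq> j \<longrightarrow> m \<noteq> k \<longrightarrow> xs ! m = zs ! m) \<and> zs ! j = xs ! k \<and> zs ! k = xs ! j
        \<longleftrightarrow> zs = swp j k xs" (is "?a \<longleftrightarrow> ?b")
  proof
    assume ?a then show ?b using l assms by (intro nth_equalityI) (auto simp: swp_nth tr_def)
  next
    assume ?b then show ?a using l assms by (auto simp: swp_nth tr_def)
  qed
  then show ?thesis unfolding Pswap_def emb_def by auto
qed

lemma mmul_Pswap_left:
  assumes "j < L" "k < L" "j \<noteq> k" "xs \<in> tuples N L"
  shows "mmul N L (Pswap L j k) A xs ys = A (swp j k xs) ys"
proof -
  have P: "\<And>zs. zs \<in> tuples N L \<Longrightarrow> Pswap L j k xs zs = (if zs = swp j k xs then 1 else 0)"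
    using assms by (auto simp: Pswap_eq tuplesD)
  show ?thesis unfolding mmul_def
    by (subst sum_single[where z="swp j k xs"]) (simp_all add: P assms swp_T)
qed

lemma mmul_Pswap_right:
  assumes "j < L" "k < L" "j \<noteq> k" "ys \<in> tuples N L"
  shows "mmul N L A (Pswap L j k) xs ys = A xs (swp j k ys)"
proof -
  have "\<And>zs. zs \<in> tuples N L \<Longrightarrow> Pswap L j k zs ys = (if zs = swp j k ys then 1 else 0)"
    using assms by (auto simp: Pswap_eq swp_swp tuplesD)
  then show ?thesis unfolding mmul_def
    by (subst sum_single[where z="swp j k ys"]) (auto simp: assms swp_T)
qed

lemma mmul_congT:
  assumes "\<And>zs. zs \<in> tuples N L \<Longrightarrow> A xs zs = A' xs zs"
      and "\<And>zs. zs \<in> tuples N L \<Longrightarrow> B zs ys = B' zs ys"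
  shows "mmul N L A B xs ys = mmul N L A' B' xs ys"
  unfolding mmul_def using assms by simp

lemma emb_swp:
  assumes "length xs = L" "length ys = L" "j < L" "k < L" "p < L" "q < L"
  shows "emb L p q M (swp j k xs) (swp j k ys) = emb L (tr j k p) (tr j k q) M xs ys"
proof -
  have "(\<forall>m<L. m \<noteq> p \<longrightarrow> m \<noteq> q \<longrightarrow> swp j k xs ! m = swp j k ys ! m) \<longleftrightarrow>
        (\<forall>m<L. m \<noteq> tr j k p \<longrightarrow> m \<noteq> tr j k q \<longrightarrow> xs ! m = ys ! m)" (is "?a \<longleftrightarrow> ?b")
  proof
    assume a: ?a
    show ?b
    proof (intro allI impI)
      fix m assume m: "m < L" "m \<noteq> tr j k p" "m \<noteq> tr j k q"
      have "tr j k m < L" using m assms by (simp add: tr_less)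
      moreover have "tr j k m \<noteq> p" "tr j k m \<noteq> q" using m by (metis tr_tr)+
      ultimately have "swp j k xs ! tr j k m = swp j k ys ! tr j k m" using a by blast
      then show "xs ! m = ys ! m" using assms \<open>tr j k m < L\<close> by (simp add: swp_nth)
    qed
  next
    assume b: ?b
    show ?a
    proof (intro allI impI)
      fix m assume m: "m < L" "m \<noteq> p" "m \<noteq> q"
      have "tr j k m \<noteq> tr j k p" "tr j k m \<noteq> tr j k q" using m by (metis tr_tr)+
      then have "xs ! tr j k m = ys ! tr j k m" using b m assms by (simp add: tr_less)
      then show "swp j k xs ! m = swp j k ys ! m" using m assms by (simp add: swp_nth)
    qed
  qed
  then show ?thesis unfolding emb_def using assms by (auto simp: swp_nth)
qed

definition cP :: "nat \<Rightarrow> nat \<Rightarrow> nat \<Rightarrow> nat \<Rightarrow> op" where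
  "cP N L j k = cl N L (Pswap L j k)"

lemma cP_cP: "j < L \<Longrightarrow> k < L \<Longrightarrow> j \<noteq> k \<Longrightarrow> mmul N L (cP N L j k) (cP N L j k) = cl N L idop"
  unfolding cP_def mmul_cl_is_cl
  by (auto simp: fun_eq_iff cl_def mmul_Pswap_left Pswap_eq swp_T swp_swp tuplesD idop_def)

lemma cP_conj:
  assumes "j < L" "k < L" "j \<noteq> k" "p < L" "q < L"
  shows "mmul N L (cP N L j k) (mmul N L (cl N L (emb L p q M)) (cP N L j k)) = cl N L (emb L (tr j k p) (tr j k q) M)"
  unfolding cP_def mmul_cl_is_cl
  by (auto simp: fun_eq_iff cl_def mmul_Pswap_left mmul_Pswap_right swp_T assms emb_swp tuplesD)

lemma P_braid:
  assumes "Suc (Suc b) < L"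
  shows "mmul N L (cP N L b (Suc b)) (mmul N L (cP N L (Suc b) (Suc (Suc b))) (cP N L b (Suc b)))
       = mmul N L (cP N L (Suc b) (Suc (Suc b))) (mmul N L (cP N L b (Suc b)) (cP N L (Suc b) (Suc (Suc b))))"
proof -
  have e: "swp b (Suc b) (swp (Suc b) (Suc (Suc b)) (swp b (Suc b) xs)) =
           swp (Suc b) (Suc (Suc b)) (swp b (Suc b) (swp (Suc b) (Suc (Suc b)) xs))"
    if "length xs = L" for xs
    using that assms by (intro nth_equalityI) (auto simp: swp_nth tr_def)
  have l: "b < L" "Suc b < L" "Suc (Suc b) < L" using assms by auto
  have "mmul N L (Pswap L b (Suc b)) (mmul N L (Pswap L (Suc b) (Suc (Suc b))) (Pswap L b (Suc b))) xs ys
      = mmul N L (Pswap L (Suc b) (Suc (Suc b))) (mmul N L (Pswap L b (Suc b)) (Pswap L (Suc b) (Suc (Suc b)))) xs ys"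
    if "xs \<in> tuples N L" "ys \<in> tuples N L" for xs ys
  proof -
    have lx: "length xs = L" "length ys = L" using that by (auto simp: tuplesD)
    have s1: "swp b (Suc b) xs \<in> tuples N L" "swp (Suc b) (Suc (Suc b)) xs \<in> tuples N L"
      using that l by (auto intro: swp_T)
    have s2: "swp (Suc b) (Suc (Suc b)) (swp b (Suc b) xs) \<in> tuples N L"
         "swp b (Suc b) (swp (Suc b) (Suc (Suc b)) xs) \<in> tuples N L"
      using s1 l by (auto intro: swp_T)
    show ?thesis
      using l lx s1 s2 that by (simp add: mmul_Pswap_left Pswap_eq e tuplesD)
  qed
  then show ?thesis unfolding cP_def mmul_cl_is_cl by (auto simp: fun_eq_iff cl_def)
qed

definition win :: "nat \<Rightarrow> nat \<Rightarrow> nat list \<Rightarrow> nat list" where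
  "win p w xs = map (\<lambda>i. xs ! (p + i)) [0..<w]"
definition ins :: "nat \<Rightarrow> nat \<Rightarrow> nat list \<Rightarrow> nat list \<Rightarrow> nat list" where
  "ins p w xs t = map (\<lambda>m. if p \<le> m \<and> m < p + w then t ! (m - p) else xs ! m) [0..<length xs]"
definition agreeW :: "nat \<Rightarrow> nat \<Rightarrow> nat \<Rightarrow> nat list \<Rightarrow> nat list \<Rightarrow> bool" where
  "agreeW L p w xs ys \<longleftrightarrow> (\<forall>m<L. (m < p \<or> p + w \<le> m) \<longrightarrow> xs ! m = ys ! m)"
definition embW :: "nat \<Rightarrow> nat \<Rightarrow> nat \<Rightarrow> op \<Rightarrow> op" where
  "embW L p w M xs ys = (if agreeW L p w xs ys then M (win p w xs) (win p w ys) else 0)"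

lemma win_T: "xs \<in> tuples N L \<Longrightarrow> p + w \<le> L \<Longrightarrow> win p w xs \<in> tuples N w"
  by (rule tuplesI) (auto simp: win_def tuplesD)

lemma ins_T: "xs \<in> tuples N L \<Longrightarrow> t \<in> tuples N w \<Longrightarrow> p + w \<le> L \<Longrightarrow> ins p w xs t \<in> tuples N L"
  by (rule tuplesI) (auto simp: ins_def tuplesD)

lemma win_ins: "length t = w \<Longrightarrow> p + w \<le> length xs \<Longrightarrow> win p w (ins p w xs t) = t"
  by (rule nth_equalityI) (auto simp: win_def ins_def)

lemma ins_win: "agreeW L p w xs zs \<Longrightarrow> length xs = L \<Longrightarrow> length zs = L \<Longrightarrow> p + w \<le> L \<Longrightarrow>
   ins p w xs (win p w zs) = zs"
  by (rule nth_equalityI) (auto simp: win_def ins_def agreeW_def)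

lemma agree_ins: "length xs = L \<Longrightarrow> agreeW L p w xs (ins p w xs t)"
  by (auto simp: agreeW_def ins_def)

lemma agreeW_sym: "agreeW L p w xs ys \<Longrightarrow> agreeW L p w ys xs"
  by (auto simp: agreeW_def)
lemma agreeW_trans: "agreeW L p w xs ys \<Longrightarrow> agreeW L p w ys zs \<Longrightarrow> agreeW L p w xs zs"
  by (auto simp: agreeW_def)

lemma embW_mul:
  assumes xs: "xs \<in> tuples N L" and ys: "ys \<in> tuples N L" and pw: "p + w \<le> L"
  shows "mmul N L (embW L p w A) (embW L p w B) xs ys = embW L p w (mmul N w A B) xs ys"
proof -
  define f where "f zs = embW L p w A xs zs * embW L p w B zs ys" for zs
  define S where "S = {zs \<in> tuples N L. agreeW L p w xs zs}"
  have lx: "length xs = L" "length ys = L" using xs ys by (auto simp: tuplesD)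
  have "mmul N L (embW L p w A) (embW L p w B) xs ys = sum f (tuples N L)"
    by (simp add: mmul_def f_def)
  also have "\<dots> = sum f S"
    by (rule sum.mono_neutral_right) (auto simp: S_def f_def embW_def)
  also have "\<dots> = sum (\<lambda>t. f (ins p w xs t)) (tuples N w)"
  proof (rule sum.reindex_bij_witness[where j = "win p w" and i = "ins p w xs"])
    fix a assume "a \<in> S"
    then show "ins p w xs (win p w a) = a" "win p w a \<in> tuples N w" "f (ins p w xs (win p w a)) = f a"
      using lx pw by (auto simp: S_def ins_win win_T tuplesD)
  next
    fix b assume b: "b \<in> tuples N w"
    then show "win p w (ins p w xs b) = b" using lx pw by (auto simp: win_ins tuplesD)
    show "ins p w xs b \<in> S" using b xs pw lx by (auto simp: S_def ins_T agree_ins)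
  qed
  also have "\<dots> = (if agreeW L p w xs ys then \<Sum>t\<in>tuples N w. A (win p w xs) t * B t (win p w ys) else 0)"
  proof (cases "agreeW L p w xs ys")
    case True
    have "f (ins p w xs t) = A (win p w xs) t * B t (win p w ys)" if "t \<in> tuples N w" for t
    proof -
      have "agreeW L p w (ins p w xs t) ys"
        using agree_ins[OF lx(1)] True by (blast intro: agreeW_trans agreeW_sym)
      then show ?thesis using that agree_ins[OF lx(1)] lx pw
        by (simp add: f_def embW_def win_ins tuplesD)
    qed
    then show ?thesis using True by simp
  next
    case False
    have "f (ins p w xs t) = 0" for t
    proof -
      have "\<not> agreeW L p w (ins p w xs t) ys"
        using agree_ins[OF lx(1)] False by (blast intro: agreeW_trans)
      then show ?thesis by (simp add: f_def embW_def)
    qed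
    then show ?thesis using False by simp
  qed
  also have "\<dots> = embW L p w (mmul N w A B) xs ys"
    by (simp add: embW_def mmul_def)
  finally show ?thesis .
qed

lemma cl_embW_mul: "p + w \<le> L \<Longrightarrow>
  mmul N L (cl N L (embW L p w A)) (cl N L (embW L p w B)) = cl N L (embW L p w (mmul N w A B))"
  unfolding mmul_cl_is_cl by (auto simp: fun_eq_iff cl_def embW_mul)

lemma cl_embW_cong: "p + w \<le> L \<Longrightarrow> opeq N w A B \<Longrightarrow> cl N L (embW L p w A) = cl N L (embW L p w B)"
  by (auto simp: fun_eq_iff cl_def embW_def opeq_def win_T)

lemma cl_embW_idop: "p + w \<le> L \<Longrightarrow> cl N L (embW L p w idop) = cl N L idop"
proof -
  assume pw: "p + w \<le> L"
  have "embW L p w idop xs ys = idop xs ys" if "xs \<in> tuples N L" "ys \<in> tuples N L" for xs ys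
  proof -
    have l: "length xs = L" "length ys = L" using that by (auto simp: tuplesD)
    have "(agreeW L p w xs ys \<and> win p w xs = win p w ys) \<longleftrightarrow> xs = ys"
    proof
      assume a: "agreeW L p w xs ys \<and> win p w xs = win p w ys"
      show "xs = ys"
      proof (rule nth_equalityI)
        show "length xs = length ys" using l by simp
        fix m assume m: "m < length xs"
        show "xs ! m = ys ! m"
        proof (cases "m < p \<or> p + w \<le> m")
          case True then show ?thesis using a m l by (auto simp: agreeW_def)
        next
          case False
          then have "win p w xs ! (m - p) = win p w ys ! (m - p)" using a by simp
          moreover have "m - p < w" "p + (m - p) = m" using False by auto
          ultimately show ?thesis by (simp add: win_def)
        qed
      qed
    qed (auto simp: agreeW_def)
    then show ?thesis unfolding embW_def idop_def by auto
  qed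
  then show ?thesis by (auto simp: fun_eq_iff cl_def)
qed

lemma emb_embW:
  assumes "xs \<in> tuples N L" "ys \<in> tuples N L" "p \<le> j" "j < p + w" "p \<le> k" "k < p + w" "p + w \<le> L"
  shows "emb L j k M xs ys = embW L p w (emb w (j - p) (k - p) M) xs ys"
proof -
  have l: "length xs = L" "length ys = L" using assms by (auto simp: tuplesD)
  have "(\<forall>m<L. m \<noteq> j \<longrightarrow> m \<noteq> k \<longrightarrow> xs ! m = ys ! m) \<longleftrightarrow>
        agreeW L p w xs ys \<and> (\<forall>m<w. m \<noteq> j - p \<longrightarrow> m \<noteq> k - p \<longrightarrow> win p w xs ! m = win p w ys ! m)"
    (is "?a \<longleftrightarrow> ?b")
  proof
    assume ?a then show ?b using assms unfolding agreeW_def win_def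
      by (auto simp: add.commute)
  next
    assume b: ?b
    show ?a
    proof (intro allI impI)
      fix m assume m: "m < L" "m \<noteq> j" "m \<noteq> k"
      show "xs ! m = ys ! m"
      proof (cases "m < p \<or> p + w \<le> m")
        case True then show ?thesis using b m by (auto simp: agreeW_def)
      next
        case False
        then have "win p w xs ! (m - p) = win p w ys ! (m - p)" using b m assms by auto
        moreover have "m - p < w" "p + (m - p) = m" using False by auto
        ultimately show ?thesis by (simp add: win_def)
      qed
    qed
  qed
  then show ?thesis using assms unfolding emb_def embW_def by (auto simp: win_def)
qed

lemma cl_emb_embW:
  "p \<le> j \<Longrightarrow> j < p + w \<Longrightarrow> p \<le> k \<Longrightarrow> k < p + w \<Longrightarrow> p + w \<le> L \<Longrightarrow>
   cl N L (emb L j k M) = cl N L (embW L p w (emb w (j - p) (k - p) M))"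
  by (auto simp: fun_eq_iff cl_def emb_embW)


lemma emb_disj_mul:
  assumes xs: "xs \<in> tuples N L" and ys: "ys \<in> tuples N L"
    and jk: "j < L" "k < L" "p < L" "q < L" "j \<noteq> p" "j \<noteq> q" "k \<noteq> p" "k \<noteq> q"
  shows "mmul N L (emb L j k A) (emb L p q B) xs ys =
    (if (\<forall>m<L. m \<noteq> j \<longrightarrow> m \<noteq> k \<longrightarrow> m \<noteq> p \<longrightarrow> m \<noteq> q \<longrightarrow> xs ! m = ys ! m)
     then A (xs ! j) (xs ! k) (ys ! j) (ys ! k) * B (xs ! p) (xs ! q) (ys ! p) (ys ! q) else 0)"
proof -
  have l: "length xs = L" "length ys = L" using xs ys by (auto simp: tuplesD)
  define z0 where "z0 = map (\<lambda>m. if m = p \<or> m = q then xs ! m else ys ! m) [0..<L]"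
  have z0T: "z0 \<in> tuples N L" unfolding z0_def using xs ys by (intro tuplesI) (auto simp: tuplesD)
  have z0n: "m < L \<Longrightarrow> z0 ! m = (if m = p \<or> m = q then xs ! m else ys ! m)" for m
    by (simp add: z0_def)
  have other: "emb L j k A xs zs * emb L p q B zs ys = 0" if "zs \<in> tuples N L" "zs \<noteq> z0" for zs
  proof (rule ccontr)
    assume "emb L j k A xs zs * emb L p q B zs ys \<noteq> 0"
    then have a1: "\<forall>m<L. m \<noteq> j \<longrightarrow> m \<noteq> k \<longrightarrow> xs ! m = zs ! m"
      and a2: "\<forall>m<L. m \<noteq> p \<longrightarrow> m \<noteq> q \<longrightarrow> zs ! m = ys ! m"
      by (auto simp: emb_def split: if_splits)
    have "zs = z0"
      using that(1) z0T
    proof (rule tuples_eqI)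
      fix m assume "m < L"
      then show "zs ! m = z0 ! m" using a1 a2 jk by (auto simp: z0n)
    qed
    then show False using that by simp
  qed
  have "mmul N L (emb L j k A) (emb L p q B) xs ys = emb L j k A xs z0 * emb L p q B z0 ys"
    unfolding mmul_def by (rule sum_single[OF finite_tuples z0T]) (use other in auto)
  also have "\<dots> = (if (\<forall>m<L. m \<noteq> j \<longrightarrow> m \<noteq> k \<longrightarrow> m \<noteq> p \<longrightarrow> m \<noteq> q \<longrightarrow> xs ! m = ys ! m)
     then A (xs ! j) (xs ! k) (ys ! j) (ys ! k) * B (xs ! p) (xs ! q) (ys ! p) (ys ! q) else 0)"
  proof -
    have "(\<forall>m<L. m \<noteq> j \<longrightarrow> m \<noteq> k \<longrightarrow> xs ! m = z0 ! m) \<longleftrightarrow>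
          (\<forall>m<L. m \<noteq> j \<longrightarrow> m \<noteq> k \<longrightarrow> m \<noteq> p \<longrightarrow> m \<noteq> q \<longrightarrow> xs ! m = ys ! m)"
      by (auto simp: z0n)
    moreover have "\<forall>m<L. m \<noteq> p \<longrightarrow> m \<noteq> q \<longrightarrow> z0 ! m = ys ! m" by (auto simp: z0n)
    ultimately show ?thesis using jk unfolding emb_def by (auto simp: z0n)
  qed
  finally show ?thesis .
qed

lemma cl_emb_comm:
  assumes "j < L" "k < L" "p < L" "q < L" "j \<noteq> p" "j \<noteq> q" "k \<noteq> p" "k \<noteq> q"
  shows "mmul N L (cl N L (emb L j k A)) (cl N L (emb L p q B)) = mmul N L (cl N L (emb L p q B)) (cl N L (emb L j k A))"
  unfolding mmul_cl_is_cl using assms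
  by (auto simp: fun_eq_iff cl_def emb_disj_mul mult.commute intro!: if_cong)

definition rs :: "nat \<Rightarrow> nat \<Rightarrow> op \<Rightarrow> bool" where "rs N L A \<longleftrightarrow> cl N L A = A"

lemma rs_cl[simp]: "rs N L (cl N L A)" by (simp add: rs_def)
lemma rs_mmul[simp]: "rs N L A \<Longrightarrow> rs N L B \<Longrightarrow> rs N L (mmul N L A B)"
  by (simp add: rs_def cl_mmul)
lemma rs_cP[simp]: "rs N L (cP N L j k)" by (simp add: cP_def)
lemma idop_left_rs: "rs N L A \<Longrightarrow> mmul N L (cl N L idop) A = A"
  using idop_left[of N L A] by (simp add: rs_def)
lemma idop_right_rs: "rs N L A \<Longrightarrow> mmul N L A (cl N L idop) = A"
  using idop_right[of N L A] by (simp add: rs_def)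

lemma cP_cP_left: "j < L \<Longrightarrow> k < L \<Longrightarrow> j \<noteq> k \<Longrightarrow> rs N L X \<Longrightarrow>
  mmul N L (cP N L j k) (mmul N L (cP N L j k) X) = X"
  by (simp add: mmul_assoc[symmetric] cP_cP idop_left_rs)

lemma ST:
  assumes "j < L" "k < L" "j \<noteq> k" "p < L" "q < L" "rs N L X"
  shows "mmul N L (cl N L (emb L p q M)) (mmul N L (cP N L j k) X)
       = mmul N L (cP N L j k) (mmul N L (cl N L (emb L (tr j k p) (tr j k q) M)) X)"
proof -
  have "mmul N L (cP N L j k) (mmul N L (cl N L (emb L (tr j k p) (tr j k q) M)) X)
      = mmul N L (cP N L j k) (mmul N L (mmul N L (cP N L j k) (mmul N L (cl N L (emb L p q M)) (cP N L j k))) X)"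
    by (simp add: cP_conj assms)
  also have "\<dots> = mmul N L (cP N L j k) (mmul N L (cP N L j k) (mmul N L (cl N L (emb L p q M)) (mmul N L (cP N L j k) X)))"
    by (simp add: mmul_assoc)
  also have "\<dots> = mmul N L (cl N L (emb L p q M)) (mmul N L (cP N L j k) X)"
    using assms by (simp add: cP_cP_left)
  finally show ?thesis by simp
qed

lemma comm_left: "mmul N L X Y = mmul N L Y X \<Longrightarrow> mmul N L X (mmul N L Y Z) = mmul N L Y (mmul N L X Z)"
  by (metis mmul_assoc)

definition cR :: "(nat \<Rightarrow> 'p \<Rightarrow> 'p \<Rightarrow> complex) \<Rightarrow> (nat \<Rightarrow> nat \<Rightarrow> 'p \<Rightarrow> 'p \<Rightarrow> complex)
    \<Rightarrow> (nat \<Rightarrow> nat \<Rightarrow> 'p \<Rightarrow> 'p \<Rightarrow> complex) \<Rightarrow> nat \<Rightarrow> nat \<Rightarrow> nat \<Rightarrow> nat \<Rightarrow> 'p \<Rightarrow> 'p \<Rightarrow> op" where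
  "cR a b c N L j k u v = cl N L (Rop a b c L j k u v)"

lemma rs_cR[simp]: "rs N L (cR a b c N L j k u v)" by (simp add: cR_def)

lemma cl_Rhat: "cl N L (Rhat N L a b c \<xi> j) = mmul N L (cP N L j (Suc j)) (cR a b c N L j (Suc j) (\<xi> j) (\<xi> (Suc j)))"
  by (simp add: Rhat_def cl_mmul cP_def cR_def)

lemma cR_win:
  "p \<le> j \<Longrightarrow> j < p + w \<Longrightarrow> p \<le> k \<Longrightarrow> k < p + w \<Longrightarrow> p + w \<le> L \<Longrightarrow>
   cR a b c N L j k u v = cl N L (embW L p w (Rop a b c w (j - p) (k - p) u v))"
  unfolding cR_def Rop_def by (rule cl_emb_embW)

lemma U_lift:
  assumes unit: "\<And>x y. opeq N 2 (mmul N 2 (Rop a b c 2 0 1 x y) (Rop a b c 2 1 0 y x)) idop"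
    and bL: "Suc j < L"
  shows "mmul N L (cR a b c N L (Suc j) j y x) (cR a b c N L j (Suc j) x y) = cl N L idop"
proof -
  have lift: "mmul N L (cR a b c N L j (Suc j) y x) (cR a b c N L (Suc j) j x y) = cl N L idop"
  proof -
    have "mmul N L (cR a b c N L j (Suc j) y x) (cR a b c N L (Suc j) j x y)
       = mmul N L (cl N L (embW L j 2 (Rop a b c 2 0 1 y x))) (cl N L (embW L j 2 (Rop a b c 2 1 0 x y)))"
      using bL by (simp add: cR_win[where p=j and w=2])
    also have "\<dots> = cl N L (embW L j 2 (mmul N 2 (Rop a b c 2 0 1 y x) (Rop a b c 2 1 0 x y)))"
      using bL by (simp add: cl_embW_mul)
    also have "\<dots> = cl N L (embW L j 2 idop)"
      using bL unit by (intro cl_embW_cong) auto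
    also have "\<dots> = cl N L idop" using bL by (simp add: cl_embW_idop)
    finally show ?thesis .
  qed
  have j: "j < L" "Suc j < L" "j \<noteq> Suc j" using bL by auto
  have c1: "cR a b c N L (Suc j) j y x = mmul N L (cP N L j (Suc j)) (mmul N L (cR a b c N L j (Suc j) y x) (cP N L j (Suc j)))"
    unfolding cR_def Rop_def using cP_conj[OF j, of j "Suc j"] j by (simp add: tr_def)
  have c2: "cR a b c N L j (Suc j) x y = mmul N L (cP N L j (Suc j)) (mmul N L (cR a b c N L (Suc j) j x y) (cP N L j (Suc j)))"
    unfolding cR_def Rop_def using cP_conj[OF j, of "Suc j" j] j by (simp add: tr_def)
  have "mmul N L (cR a b c N L (Suc j) j y x) (cR a b c N L j (Suc j) x y)
      = mmul N L (cP N L j (Suc j)) (mmul N L (cR a b c N L j (Suc j) y x) (mmul N L (cP N L j (Suc j))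
          (mmul N L (cP N L j (Suc j)) (mmul N L (cR a b c N L (Suc j) j x y) (cP N L j (Suc j))))))"
    by (subst c1, subst c2) (simp add: mmul_assoc)
  also have "\<dots> = mmul N L (cP N L j (Suc j)) (mmul N L (mmul N L (cR a b c N L j (Suc j) y x) (cR a b c N L (Suc j) j x y)) (cP N L j (Suc j)))"
    using j by (simp add: cP_cP_left mmul_assoc)
  also have "\<dots> = cl N L idop" using j by (simp add: lift idop_left_rs cP_cP)
  finally show ?thesis .
qed


lemma ST_R:
  assumes "j < L" "k < L" "j \<noteq> k" "p < L" "q < L" "rs N L X"
  shows "mmul N L (cR a b c N L p q u v) (mmul N L (cP N L j k) X)
       = mmul N L (cP N L j k) (mmul N L (cR a b c N L (tr j k p) (tr j k q) u v) X)"
  unfolding cR_def Rop_def by (rule ST[OF assms])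

lemma four_comm:
  assumes "j < L" "k < L" "p < L" "q < L" "j \<noteq> p" "j \<noteq> q" "k \<noteq> p" "k \<noteq> q"
  shows "mmul N L (mmul N L (cl N L (emb L j k A1)) (cl N L (emb L j k A2))) (mmul N L (cl N L (emb L p q B1)) (cl N L (emb L p q B2)))
       = mmul N L (mmul N L (cl N L (emb L p q B1)) (cl N L (emb L p q B2))) (mmul N L (cl N L (emb L j k A1)) (cl N L (emb L j k A2)))"
proof -
  have c: "mmul N L (cl N L (emb L j k A)) (cl N L (emb L p q B)) = mmul N L (cl N L (emb L p q B)) (cl N L (emb L j k A))" for A B
    using assms by (rule cl_emb_comm)
  let ?A1 = "cl N L (emb L j k A1)" and ?A2 = "cl N L (emb L j k A2)"
    and ?B1 = "cl N L (emb L p q B1)" and ?B2 = "cl N L (emb L p q B2)"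
  have "mmul N L (mmul N L ?A1 ?A2) (mmul N L ?B1 ?B2) = mmul N L ?A1 (mmul N L ?A2 (mmul N L ?B1 ?B2))"
    by (simp add: mmul_assoc)
  also have "\<dots> = mmul N L ?A1 (mmul N L ?B1 (mmul N L ?A2 ?B2))" by (simp add: comm_left[OF c])
  also have "\<dots> = mmul N L ?A1 (mmul N L ?B1 (mmul N L ?B2 ?A2))" by (simp add: c)
  also have "\<dots> = mmul N L ?B1 (mmul N L ?A1 (mmul N L ?B2 ?A2))" by (simp add: comm_left[OF c])
  also have "\<dots> = mmul N L ?B1 (mmul N L ?B2 (mmul N L ?A1 ?A2))" by (simp add: comm_left[OF c])
  also have "\<dots> = mmul N L (mmul N L ?B1 ?B2) (mmul N L ?A1 ?A2)" by (simp add: mmul_assoc)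
  finally show ?thesis .
qed

lemma rC:
  assumes "Suc i < g" "Suc g < L"
  shows "mmul N L (cl N L (Rhat N L a b c (\<xi> \<circ> adjsw i) g)) (cl N L (Rhat N L a b c \<xi> i))
       = mmul N L (cl N L (Rhat N L a b c (\<xi> \<circ> adjsw g) i)) (cl N L (Rhat N L a b c \<xi> g))"
proof -
  have e: "(\<xi> \<circ> adjsw i) g = \<xi> g" "(\<xi> \<circ> adjsw i) (Suc g) = \<xi> (Suc g)"
       "(\<xi> \<circ> adjsw g) i = \<xi> i" "(\<xi> \<circ> adjsw g) (Suc i) = \<xi> (Suc i)"
    using assms by (auto simp: adjsw_def)
  show ?thesis unfolding cl_Rhat e unfolding cP_def Pswap_def cR_def Rop_def
    by (rule four_comm) (use assms in auto)
qed

lemma rU: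
  assumes unit: "\<And>x y. opeq N 2 (mmul N 2 (Rop a b c 2 0 1 x y) (Rop a b c 2 1 0 y x)) idop"
    and bL: "Suc j < L"
  shows "mmul N L (cl N L (Rhat N L a b c (\<xi> \<circ> adjsw j) j)) (cl N L (Rhat N L a b c \<xi> j)) = cl N L idop"
proof -
  have e: "(\<xi> \<circ> adjsw j) j = \<xi> (Suc j)" "(\<xi> \<circ> adjsw j) (Suc j) = \<xi> j" by (auto simp: adjsw_def)
  have l: "j < L" "Suc j < L" "j \<noteq> Suc j" using bL by auto
  have "mmul N L (mmul N L (cP N L j (Suc j)) (cR a b c N L j (Suc j) (\<xi> (Suc j)) (\<xi> j)))
          (mmul N L (cP N L j (Suc j)) (cR a b c N L j (Suc j) (\<xi> j) (\<xi> (Suc j))))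
      = mmul N L (cP N L j (Suc j)) (mmul N L (cR a b c N L j (Suc j) (\<xi> (Suc j)) (\<xi> j))
          (mmul N L (cP N L j (Suc j)) (cR a b c N L j (Suc j) (\<xi> j) (\<xi> (Suc j)))))"
    by (simp add: mmul_assoc)
  also have "\<dots> = mmul N L (cP N L j (Suc j)) (mmul N L (cP N L j (Suc j)) (mmul N L (cR a b c N L (Suc j) j (\<xi> (Suc j)) (\<xi> j))
          (cR a b c N L j (Suc j) (\<xi> j) (\<xi> (Suc j)))))"
    using l by (subst ST_R) (auto simp: tr_def)
  also have "\<dots> = cl N L idop"
    using l by (simp add: cP_cP_left U_lift[OF unit bL])
  finally show ?thesis unfolding cl_Rhat e .
qed

lemma YBE_lift:
  assumes ybe: "\<And>x y z. opeq N 3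
        (mmul N 3 (Rop a b c 3 0 1 x y) (mmul N 3 (Rop a b c 3 0 2 x z) (Rop a b c 3 1 2 y z)))
        (mmul N 3 (Rop a b c 3 1 2 y z) (mmul N 3 (Rop a b c 3 0 2 x z) (Rop a b c 3 0 1 x y)))"
    and bL: "Suc (Suc j) < L"
  shows "mmul N L (cR a b c N L j (Suc j) x y) (mmul N L (cR a b c N L j (Suc (Suc j)) x z) (cR a b c N L (Suc j) (Suc (Suc j)) y z))
       = mmul N L (cR a b c N L (Suc j) (Suc (Suc j)) y z) (mmul N L (cR a b c N L j (Suc (Suc j)) x z) (cR a b c N L j (Suc j) x y))"
proof -
  have w: "j + 3 \<le> L" using bL by simp
  have r1: "cR a b c N L j (Suc j) x y = cl N L (embW L j 3 (Rop a b c 3 0 1 x y))"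
    using w by (subst cR_win[where p=j and w=3]) auto
  have r2: "cR a b c N L j (Suc (Suc j)) x z = cl N L (embW L j 3 (Rop a b c 3 0 2 x z))"
    using w by (subst cR_win[where p=j and w=3]) auto
  have r3: "cR a b c N L (Suc j) (Suc (Suc j)) y z = cl N L (embW L j 3 (Rop a b c 3 1 2 y z))"
    using w by (subst cR_win[where p=j and w=3]) auto
  show ?thesis unfolding r1 r2 r3 cl_embW_mul[OF w] by (rule cl_embW_cong[OF w ybe])
qed

lemma braid_L:
  assumes ybe: "\<And>x y z. opeq N 3
        (mmul N 3 (Rop a b c 3 0 1 x y) (mmul N 3 (Rop a b c 3 0 2 x z) (Rop a b c 3 1 2 y z)))
        (mmul N 3 (Rop a b c 3 1 2 y z) (mmul N 3 (Rop a b c 3 0 2 x z) (Rop a b c 3 0 1 x y)))"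
    and bL: "Suc (Suc j) < L"
  shows "mmul N L (mmul N L (cP N L j (Suc j)) (cR a b c N L j (Suc j) y z))
          (mmul N L (mmul N L (cP N L (Suc j) (Suc (Suc j))) (cR a b c N L (Suc j) (Suc (Suc j)) x z))
            (mmul N L (cP N L j (Suc j)) (cR a b c N L j (Suc j) x y)))
       = mmul N L (mmul N L (cP N L (Suc j) (Suc (Suc j))) (cR a b c N L (Suc j) (Suc (Suc j)) x y))
          (mmul N L (mmul N L (cP N L j (Suc j)) (cR a b c N L j (Suc j) x z))
            (mmul N L (cP N L (Suc j) (Suc (Suc j))) (cR a b c N L (Suc j) (Suc (Suc j)) y z)))"
    (is "?L = ?R")
proof -
  let ?m = "mmul N L"
  let ?P0 = "cP N L j (Suc j)" and ?P1 = "cP N L (Suc j) (Suc (Suc j))"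
  let ?R01 = "cR a b c N L j (Suc j)" and ?R02 = "cR a b c N L j (Suc (Suc j))"
    and ?R12 = "cR a b c N L (Suc j) (Suc (Suc j))"
  have l: "j < L" "Suc j < L" "Suc (Suc j) < L" using bL by auto
  have st: "?m (cR a b c N L p q u v) (?m (cP N L i k) X) = ?m (cP N L i k) (?m (cR a b c N L (tr i k p) (tr i k q) u v) X)"
    if "i < L" "k < L" "i \<noteq> k" "p < L" "q < L" "rs N L X" for i k p q u v X
    using that by (rule ST_R)
  have s1: "?m (?R01 y z) (?m ?P1 X) = ?m ?P1 (?m (?R02 y z) X)" if "rs N L X" for X
    using st[of "Suc j" "Suc (Suc j)" j "Suc j" X y z] l that by (simp add: tr_def)
  have s2: "?m (?R12 x z) (?m ?P0 X) = ?m ?P0 (?m (?R02 x z) X)" if "rs N L X" for X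
    using st[of j "Suc j" "Suc j" "Suc (Suc j)" X x z] l that by (simp add: tr_def)
  have s3: "?m (?R02 y z) (?m ?P0 X) = ?m ?P0 (?m (?R12 y z) X)" if "rs N L X" for X
    using st[of j "Suc j" j "Suc (Suc j)" X y z] l that by (simp add: tr_def)
  have s4: "?m (?R01 x z) (?m ?P1 X) = ?m ?P1 (?m (?R02 x z) X)" if "rs N L X" for X
    using st[of "Suc j" "Suc (Suc j)" j "Suc j" X x z] l that by (simp add: tr_def)
  have s5: "?m (?R12 x y) (?m ?P0 X) = ?m ?P0 (?m (?R02 x y) X)" if "rs N L X" for X
    using st[of j "Suc j" "Suc j" "Suc (Suc j)" X x y] l that by (simp add: tr_def)
  have s6: "?m (?R02 x y) (?m ?P1 X) = ?m ?P1 (?m (?R01 x y) X)" if "rs N L X" for X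
    using st[of "Suc j" "Suc (Suc j)" j "Suc (Suc j)" X x y] l that by (simp add: tr_def)
  have "?L = ?m ?P0 (?m (?R01 y z) (?m ?P1 (?m (?R12 x z) (?m ?P0 (?R01 x y)))))"
    by (simp add: mmul_assoc)
  also have "\<dots> = ?m ?P0 (?m ?P1 (?m ?P0 (?m (?R12 y z) (?m (?R02 x z) (?R01 x y)))))"
    by (simp add: s1 s2 s3)
  also have "\<dots> = ?m ?P0 (?m ?P1 (?m ?P0 (?m (?R01 x y) (?m (?R02 x z) (?R12 y z)))))"
    using YBE_lift[OF ybe bL, of x y z] by simp
  also have "\<dots> = ?m (?m ?P0 (?m ?P1 ?P0)) (?m (?R01 x y) (?m (?R02 x z) (?R12 y z)))"
    by (simp add: mmul_assoc)
  also have "\<dots> = ?m (?m ?P1 (?m ?P0 ?P1)) (?m (?R01 x y) (?m (?R02 x z) (?R12 y z)))"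
    using P_braid[OF bL] by simp
  also have "\<dots> = ?m ?P1 (?m ?P0 (?m ?P1 (?m (?R01 x y) (?m (?R02 x z) (?R12 y z)))))"
    by (simp add: mmul_assoc)
  also have "\<dots> = ?m ?P1 (?m (?R12 x y) (?m ?P0 (?m (?R01 x z) (?m ?P1 (?R12 y z)))))"
    by (simp add: s4 s5 s6)
  also have "\<dots> = ?R" by (simp add: mmul_assoc)
  finally show ?thesis .
qed


lemma rB:
  assumes ybe: "\<And>x y z. opeq N 3
        (mmul N 3 (Rop a b c 3 0 1 x y) (mmul N 3 (Rop a b c 3 0 2 x z) (Rop a b c 3 1 2 y z)))
        (mmul N 3 (Rop a b c 3 1 2 y z) (mmul N 3 (Rop a b c 3 0 2 x z) (Rop a b c 3 0 1 x y)))"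
    and bL: "Suc (Suc j) < L"
  shows "mmul N L (cl N L (Rhat N L a b c (\<xi> \<circ> adjsw j \<circ> adjsw (Suc j)) j))
           (mmul N L (cl N L (Rhat N L a b c (\<xi> \<circ> adjsw j) (Suc j))) (cl N L (Rhat N L a b c \<xi> j)))
       = mmul N L (cl N L (Rhat N L a b c (\<xi> \<circ> adjsw (Suc j) \<circ> adjsw j) (Suc j)))
           (mmul N L (cl N L (Rhat N L a b c (\<xi> \<circ> adjsw (Suc j)) j)) (cl N L (Rhat N L a b c \<xi> (Suc j))))"
proof -
  have e: "(\<xi> \<circ> adjsw j \<circ> adjsw (Suc j)) j = \<xi> (Suc j)"
    "(\<xi> \<circ> adjsw j \<circ> adjsw (Suc j)) (Suc j) = \<xi> (Suc (Suc j))"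
    "(\<xi> \<circ> adjsw j) (Suc j) = \<xi> j" "(\<xi> \<circ> adjsw j) (Suc (Suc j)) = \<xi> (Suc (Suc j))"
    "(\<xi> \<circ> adjsw (Suc j) \<circ> adjsw j) (Suc j) = \<xi> j"
    "(\<xi> \<circ> adjsw (Suc j) \<circ> adjsw j) (Suc (Suc j)) = \<xi> (Suc j)"
    "(\<xi> \<circ> adjsw (Suc j)) j = \<xi> j" "(\<xi> \<circ> adjsw (Suc j)) (Suc j) = \<xi> (Suc (Suc j))"
    by (auto simp: adjsw_def)
  show ?thesis unfolding cl_Rhat e by (rule braid_L[OF ybe bL])
qed

lemma hatprod_canon:
  assumes unit: "\<And>x y. opeq N 2 (mmul N 2 (Rop a b c 2 0 1 x y) (Rop a b c 2 1 0 y x)) idop"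
    and ybe: "\<And>x y z. opeq N 3
        (mmul N 3 (Rop a b c 3 0 1 x y) (mmul N 3 (Rop a b c 3 0 2 x z) (Rop a b c 3 1 2 y z)))
        (mmul N 3 (Rop a b c 3 1 2 y z) (mmul N 3 (Rop a b c 3 0 2 x z) (Rop a b c 3 0 1 x y)))"
    and w: "\<forall>i\<in>set w. Suc i < L"
  shows "cl N L (hatprod N L a b c \<xi> w) = cl N L (hatprod N L a b c \<xi> (canon L (perm w)))"
proof -
  interpret wr: wrep "mmul N L" "cl N L idop" "\<lambda>\<xi> i. cl N L (Rhat N L a b c \<xi> i)" L "{A. rs N L A}"
    by unfold_locales (auto simp: mmul_assoc idop_left_rs idop_right_rs rU[OF unit] rB[OF ybe] intro: rC)
  have hp: "cl N L (hatprod N L a b c \<xi>' v) = wr.hp \<xi>' v" for v \<xi>'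
    by (induction v arbitrary: \<xi>') (simp_all add: cl_mmul)
  show ?thesis unfolding hp using w by (rule wr.hp_canon)
qed

lemma Pmat_eq:
  assumes "length xs = L" "length zs = L"
  shows "Pmat L s xs zs = (if zs = permute_list s xs then 1 else 0)"
proof -
  have "(\<forall>i<L. xs ! s i = zs ! i) \<longleftrightarrow> zs = permute_list s xs"
    using assms by (auto simp: permute_list_def intro!: nth_equalityI)
  then show ?thesis by (simp add: Pmat_def)
qed

lemma pl_T: "xs \<in> tuples N L \<Longrightarrow> s permutes {0..<L} \<Longrightarrow> permute_list s xs \<in> tuples N L"
proof (rule tuplesI)
  fix i assume a: "xs \<in> tuples N L" "s permutes {0..<L}" "i < L"
  then have "s i < L" using permutes_in_image[OF a(2), of i] by simp
  then show "permute_list s xs ! i < N" using a by (simp add: permute_list_def tuplesD)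
qed (simp add: tuplesD)

lemma mmul_Pmat_left:
  assumes "xs \<in> tuples N L" "s permutes {0..<L}"
  shows "mmul N L (Pmat L s) A xs ys = A (permute_list s xs) ys"
proof -
  have P: "\<And>zs. zs \<in> tuples N L \<Longrightarrow> Pmat L s xs zs = (if zs = permute_list s xs then 1 else 0)"
    using assms by (auto simp: Pmat_eq tuplesD)
  show ?thesis unfolding mmul_def
    by (subst sum_single[where z="permute_list s xs"]) (simp_all add: P assms pl_T)
qed

lemma pl_inv_pl:
  assumes "s permutes {0..<L}" "length zs = L"
  shows "permute_list s (permute_list (inv s) zs) = zs"
proof -
  have "s permutes {..<length zs}" using assms by (simp add: lessThan_atLeast0)
  then have "permute_list (inv s \<circ> s) zs = permute_list s (permute_list (inv s) zs)"
    by (rule permute_list_compose)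
  moreover have "inv s \<circ> s = id" using assms(1) by (rule permutes_inv_o)
  ultimately show ?thesis by simp
qed

lemma pl_pl:
  assumes "s permutes {0..<L}" "t permutes {0..<L}" "length xs = L"
  shows "permute_list t (permute_list s xs) = permute_list (s \<circ> t) xs"
proof -
  have "t permutes {..<length xs}" using assms by (simp add: lessThan_atLeast0)
  then show ?thesis by (simp add: permute_list_compose)
qed

lemma is_decomp_canon: "s permutes {0..<L} \<Longrightarrow> is_decomp L s (canon L s)"
  using perm_canon[of s L] canon_valid[of L s] unfolding is_decomp_def perm_def by auto

lemma min_decomp_ok:
  assumes "s permutes {0..<L}"
  shows "(\<forall>i\<in>set (min_decomp L s). Suc i < L) \<and> perm (min_decomp L s) = s"
proof -
  have "\<exists>w. is_decomp L s w \<and> (\<forall>v. is_decomp L s v \<longrightarrow> length w \<le> length v)"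
    by (rule ex_has_least_nat[where P="is_decomp L s" and m=length, OF is_decomp_canon[OF assms]])
  then have "is_decomp L s (min_decomp L s)"
    unfolding min_decomp_def by (rule someI_ex[THEN conjunct1])
  then show ?thesis by (simp add: is_decomp_def perm_def)
qed

lemma hatprod_append:
  "cl N L (hatprod N L a b c \<xi> (u @ v)) =
   cl N L (mmul N L (hatprod N L a b c (\<xi> \<circ> perm u) v) (hatprod N L a b c \<xi> u))"
proof (induction u arbitrary: \<xi>)
  case Nil
  show ?case by (simp add: cl_mmul idop_right)
next
  case (Cons i u)
  have "cl N L (hatprod N L a b c \<xi> ((i # u) @ v))
      = mmul N L (cl N L (hatprod N L a b c (\<xi> \<circ> adjsw i) (u @ v))) (cl N L (Rhat N L a b c \<xi> i))"
    by (simp add: cl_mmul)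
  also have "\<dots> = mmul N L (mmul N L (cl N L (hatprod N L a b c (\<xi> \<circ> adjsw i \<circ> perm u) v))
        (cl N L (hatprod N L a b c (\<xi> \<circ> adjsw i) u))) (cl N L (Rhat N L a b c \<xi> i))"
    by (simp only: Cons cl_mmul)
  also have "\<dots> = cl N L (mmul N L (hatprod N L a b c (\<xi> \<circ> perm (i # u)) v) (hatprod N L a b c \<xi> (i # u)))"
    by (simp add: cl_mmul mmul_assoc comp_assoc)
  finally show ?case .
qed

context
  fixes N L :: nat and a :: "nat \<Rightarrow> 'p \<Rightarrow> 'p \<Rightarrow> complex" and b c :: "nat \<Rightarrow> nat \<Rightarrow> 'p \<Rightarrow> 'p \<Rightarrow> complex"
  assumes unit: "\<And>x y. opeq N 2 (mmul N 2 (Rop a b c 2 0 1 x y) (Rop a b c 2 1 0 y x)) idop"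
    and ybe: "\<And>x y z. opeq N 3
        (mmul N 3 (Rop a b c 3 0 1 x y) (mmul N 3 (Rop a b c 3 0 2 x z) (Rop a b c 3 1 2 y z)))
        (mmul N 3 (Rop a b c 3 1 2 y z) (mmul N 3 (Rop a b c 3 0 2 x z) (Rop a b c 3 0 1 x y)))"
begin

lemma md_canon: "s permutes {0..<L} \<Longrightarrow>
  cl N L (hatprod N L a b c \<xi> (min_decomp L s)) = cl N L (hatprod N L a b c \<xi> (canon L s))"
  using hatprod_canon[OF unit ybe, of "min_decomp L s"] min_decomp_ok[of s L] by auto

lemma H_group:
  assumes "s permutes {0..<L}" "t permutes {0..<L}"
  shows "cl N L (mmul N L (hatprod N L a b c (\<xi> \<circ> s) (canon L t)) (hatprod N L a b c \<xi> (canon L s)))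
       = cl N L (hatprod N L a b c \<xi> (canon L (s \<circ> t)))"
proof -
  have v: "\<forall>i\<in>set (canon L s @ canon L t). Suc i < L" using canon_valid[of L] by auto
  have "cl N L (mmul N L (hatprod N L a b c (\<xi> \<circ> s) (canon L t)) (hatprod N L a b c \<xi> (canon L s)))
      = cl N L (hatprod N L a b c \<xi> (canon L s @ canon L t))"
    using hatprod_append[of N L a b c \<xi> "canon L s" "canon L t"] perm_canon[OF assms(1)] by simp
  also have "\<dots> = cl N L (hatprod N L a b c \<xi> (canon L (perm (canon L s @ canon L t))))"
    by (rule hatprod_canon[OF unit ybe v])
  also have "perm (canon L s @ canon L t) = s \<circ> t"
    using perm_canon[OF assms(1)] perm_canon[OF assms(2)] by (simp add: perm_append)
  finally show ?thesis .
qed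

end

definition Eset :: "nat \<Rightarrow> nat list \<Rightarrow> (nat \<times> nat) set" where
  "Eset L g = {(i, j). i < j \<and> j < L \<and> g ! i = g ! j}"

definition nfac :: "nat \<Rightarrow> (nat \<Rightarrow> 'p \<Rightarrow> 'p \<Rightarrow> complex) \<Rightarrow> nat list \<Rightarrow> (nat \<Rightarrow> 'p) \<Rightarrow> complex" where
  "nfac L sq g \<zeta> = (\<Prod>(i, j)\<in>Eset L g. sq (g ! i) (\<zeta> i) (\<zeta> j))"

lemma finite_Eset[simp]: "finite (Eset L g)"
proof -
  have "Eset L g \<subseteq> {..<L} \<times> {..<L}" by (auto simp: Eset_def)
  then show ?thesis by (rule finite_subset) auto
qed

lemma nfac_step:
  assumes "Suc i < L" "g ! i = g ! Suc i" "g ! i < N"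
    and sq_sq: "\<And>k x y. k < N \<Longrightarrow> (sq k x y)\<^sup>2 = a k x y"
    and sq_inv: "\<And>k x y. k < N \<Longrightarrow> sq k x y * sq k y x = 1"
  shows "nfac L sq g (\<zeta> \<circ> adjsw i) * a (g ! i) (\<zeta> i) (\<zeta> (Suc i)) = nfac L sq g \<zeta>"
proof -
  define E where "E = Eset L g"
  define E' where "E' = E - {(i, Suc i)}"
  have e0: "(i, Suc i) \<in> E" using assms by (simp add: E_def Eset_def)
  have gs: "g ! adjsw i x = g ! x" for x using assms(2) by (simp add: adjsw_def)
  define f1 where "f1 = (\<lambda>(p, q). sq (g ! p) (\<zeta> (adjsw i p)) (\<zeta> (adjsw i q)))"
  define f2 where "f2 = (\<lambda>(p, q). sq (g ! p) (\<zeta> p) (\<zeta> q))"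
  have r1: "nfac L sq g (\<zeta> \<circ> adjsw i) = sq (g ! i) (\<zeta> (Suc i)) (\<zeta> i) * prod f1 E'"
    unfolding nfac_def E'_def E_def[symmetric]
    by (subst prod.remove[OF _ e0]) (simp_all add: E_def f1_def adjsw_def)
  have r3: "nfac L sq g \<zeta> = sq (g ! i) (\<zeta> i) (\<zeta> (Suc i)) * prod f2 E'"
    unfolding nfac_def E'_def E_def[symmetric]
    by (subst prod.remove[OF _ e0]) (simp_all add: E_def f2_def)
  define phi where "phi = (\<lambda>(p::nat, q::nat). (adjsw i p, adjsw i q))"
  have phiE: "phi x \<in> E'" if "x \<in> E'" for x
    using that assms(1,2) unfolding phi_def E'_def E_def Eset_def
    by (auto simp: gs adjsw_def split: if_splits)
  have phiphi: "phi (phi x) = x" for x by (auto simp: phi_def split: prod.splits)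
  have r2: "prod f1 E' = prod f2 E'"
  proof (rule prod.reindex_bij_witness[where i=phi and j=phi])
    fix x assume x: "x \<in> E'"
    show "phi (phi x) = x" by (rule phiphi)
    show "phi x \<in> E'" using x by (rule phiE)
    show "f2 (phi x) = f1 x" by (auto simp: f1_def f2_def phi_def gs split: prod.splits)
  qed (auto simp: phiphi phiE)
  have k: "g ! i < N" by fact
  show ?thesis
    unfolding r1 r2 r3 sq_sq[OF k, symmetric]
    using sq_inv[OF k, of "\<zeta> i" "\<zeta> (Suc i)"]
    by (simp add: power2_eq_square algebra_simps)
qed


lemma swp_flat: "length g = L \<Longrightarrow> Suc i < L \<Longrightarrow> g ! i = g ! Suc i \<Longrightarrow> swp i (Suc i) g = g"
  by (rule nth_equalityI) (auto simp: swp_nth tr_def)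

lemma Rhat_flat:
  assumes g: "g \<in> tuples N L" and ys: "ys \<in> tuples N L" and i: "Suc i < L" and f: "g ! i = g ! Suc i"
  shows "Rhat N L a b c \<zeta> i g ys = (if ys = g then a (g ! i) (\<zeta> i) (\<zeta> (Suc i)) else 0)"
proof -
  have l: "length g = L" "length ys = L" using g ys by (auto simp: tuplesD)
  have "Rhat N L a b c \<zeta> i g ys = Rop a b c L i (Suc i) (\<zeta> i) (\<zeta> (Suc i)) g ys"
    unfolding Rhat_def using i g by (simp add: mmul_Pswap_left swp_flat[OF l(1) i f])
  also have "\<dots> = (if ys = g then a (g ! i) (\<zeta> i) (\<zeta> (Suc i)) else 0)"
  proof -
    have "(\<forall>m<L. m \<noteq> i \<longrightarrow> m \<noteq> Suc i \<longrightarrow> g ! m = ys ! m) \<and> ys ! i = g ! i \<and> ys ! Suc i = g ! Suc i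
          \<longleftrightarrow> ys = g"
    proof
      assume a: "(\<forall>m<L. m \<noteq> i \<longrightarrow> m \<noteq> Suc i \<longrightarrow> g ! m = ys ! m) \<and> ys ! i = g ! i \<and> ys ! Suc i = g ! Suc i"
      show "ys = g"
      proof (rule nth_equalityI)
        show "length ys = length g" using l by simp
        fix m assume "m < length ys"
        then show "ys ! m = g ! m" using a l by (cases "m = i \<or> m = Suc i") auto
      qed
    qed auto
    then show ?thesis unfolding Rop_def emb_def Rmat_def using f by auto
  qed
  finally show ?thesis .
qed

lemma hatprod_flat:
  assumes g: "g \<in> tuples N L" and ys: "ys \<in> tuples N L"
    and w: "\<forall>i\<in>set w. Suc i < L \<and> g ! i = g ! Suc i"
    and sq_sq: "\<And>k x y. k < N \<Longrightarrow> (sq k x y)\<^sup>2 = a k x y"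
    and sq_inv: "\<And>k x y. k < N \<Longrightarrow> sq k x y * sq k y x = 1"
  shows "nfac L sq g (\<zeta> \<circ> perm w) * hatprod N L a b c \<zeta> w g ys = (if ys = g then nfac L sq g \<zeta> else 0)"
  using w ys
proof (induction w arbitrary: \<zeta> ys)
  case Nil then show ?case by (auto simp: idop_def)
next
  case (Cons i w)
  have iL: "Suc i < L" and f: "g ! i = g ! Suc i" using Cons.prems by auto
  have ys: "ys \<in> tuples N L" using Cons.prems by simp
  have gi: "g ! i < N" using g iL by (simp add: tuplesD)
  have IH: "nfac L sq g (\<zeta> \<circ> adjsw i \<circ> perm w) * hatprod N L a b c (\<zeta> \<circ> adjsw i) w g zs
      = (if zs = g then nfac L sq g (\<zeta> \<circ> adjsw i) else 0)" if "zs \<in> tuples N L" for zs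
    using Cons.IH[of zs "\<zeta> \<circ> adjsw i"] Cons.prems that by (simp add: comp_def)
  have "nfac L sq g (\<zeta> \<circ> perm (i # w)) * hatprod N L a b c \<zeta> (i # w) g ys
      = (\<Sum>zs\<in>tuples N L. (nfac L sq g (\<zeta> \<circ> adjsw i \<circ> perm w) * hatprod N L a b c (\<zeta> \<circ> adjsw i) w g zs)
           * Rhat N L a b c \<zeta> i zs ys)"
    by (simp add: mmul_def sum_distrib_left comp_assoc mult.assoc)
  also have "\<dots> = (\<Sum>zs\<in>tuples N L. (if zs = g then nfac L sq g (\<zeta> \<circ> adjsw i) else 0) * Rhat N L a b c \<zeta> i zs ys)"
    by (rule sum.cong) (simp_all add: IH)
  also have "\<dots> = nfac L sq g (\<zeta> \<circ> adjsw i) * Rhat N L a b c \<zeta> i g ys"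
    using g by (subst sum_single[where z=g]) simp_all
  also have "\<dots> = (if ys = g then nfac L sq g \<zeta> else 0)"
    unfolding Rhat_flat[OF g ys iL f] using nfac_step[where sq=sq and a=a and \<zeta>=\<zeta> and N=N, OF iL f gi sq_sq sq_inv] by simp
  finally show ?case .
qed

lemma canon_flat:
  fixes g :: "nat list"
  assumes "m \<le> L" "p permutes {0..<m}" "\<forall>i<m. g ! p i = g ! i"
    and mono: "\<forall>i j. i \<le> j \<longrightarrow> j < L \<longrightarrow> g ! i \<le> g ! j"
  shows "\<forall>i\<in>set (canon m p). g ! i = g ! Suc i"
  using assms(1-3)
proof (induction m arbitrary: p)
  case 0 then show ?case by simp
next
  case (Suc m)
  have mL: "m < L" using Suc.prems(1) by simp
  have pr3: "g ! p i = g ! i" if "i < Suc m" for i using Suc.prems(3) that by blast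
  define k where "k = p m"
  have "p m \<in> {0..<Suc m}" using permutes_in_image[OF Suc.prems(2), of m] by simp
  then have k: "k \<le> m" unfolding k_def by simp
  have gk: "g ! k = g ! m" unfolding k_def using pr3[of m] by simp
  have mono': "g ! i \<le> g ! j" if "i \<le> j" "j < L" for i j using mono that by blast
  have blk: "g ! j = g ! k" if "k \<le> j" "j \<le> m" for j
  proof -
    have 1: "g ! k \<le> g ! j" using mono'[of k j] that mL by linarith
    have "g ! j \<le> g ! m" using mono'[of j m] that mL by linarith
    then have "g ! j \<le> g ! k" using gk by linarith
    then show ?thesis using 1 by linarith
  qed
  have p': "dfun k m \<circ> p permutes {0..<m}" unfolding k_def by (rule canon_step_permutes[OF Suc.prems(2)])
  have gd: "g ! dfun k m j = g ! j" if "j \<le> m" for j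
  proof (cases "j = k")
    case True
    then have "dfun k m j = m" by (simp add: dfun_def)
    then show ?thesis using blk[of m] k True by simp
  next
    case False
    show ?thesis
    proof (cases "k < j")
      case True
      then have d: "dfun k m j = j - 1" using False that by (simp add: dfun_def)
      have "g ! (j - 1) = g ! k" using True that by (intro blk) auto
      moreover have "g ! j = g ! k" using True that by (intro blk) auto
      ultimately show ?thesis using d by simp
    next
      case False
      then have "dfun k m j = j" using \<open>j \<noteq> k\<close> by (simp add: dfun_def)
      then show ?thesis by simp
    qed
  qed
  have all: "\<forall>i<m. g ! (dfun k m \<circ> p) i = g ! i"
  proof (intro allI impI)
    fix i assume i: "i < m"
    have "p i \<in> {0..<Suc m}" using permutes_in_image[OF Suc.prems(2), of i] i by simp
    then have "p i \<le> m" by simp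
    then have "g ! dfun k m (p i) = g ! p i" by (rule gd)
    also have "\<dots> = g ! i" using pr3[of i] i by simp
    finally show "g ! (dfun k m \<circ> p) i = g ! i" by simp
  qed
  have IH: "\<forall>i\<in>set (canon m (dfun k m \<circ> p)). g ! i = g ! Suc i"
    by (rule Suc.IH[OF _ p' all]) (use mL in simp)
  have blk2: "\<forall>i\<in>set [k..<m]. g ! i = g ! Suc i"
  proof
    fix i assume "i \<in> set [k..<m]"
    then have "k \<le> i" "Suc i \<le> m" by auto
    then have "g ! i = g ! k" "g ! Suc i = g ! k" by (auto intro: blk)
    then show "g ! i = g ! Suc i" by simp
  qed
  have "set (canon (Suc m) p) = set [k..<m] \<union> set (canon m (dfun k m \<circ> p))"
    by (simp add: k_def)
  then show ?case using IH blk2 by blast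
qed

lemma nstable:
  assumes t: "t permutes {0..<L}" and sc: "starcond L t y" and ly: "length y = L"
  shows "nfac L sq (permute_list t y) (\<zeta> \<circ> t) = nfac L sq y \<zeta>"
proof -
  have tL: "t i < L" if "i < L" for i using permutes_in_image[OF t, of i] that by simp
  have ch: "y ! t i < y ! t j \<or> (y ! t i = y ! t j \<and> t i < t j)" if "i < j" "j < L" for i j
    using starcond_chain[OF sc that] by (simp add: key_less)
  have pl: "permute_list t y ! i = y ! t i" if "i < L" for i using that ly by (simp add: permute_list_def)
  have it: "inv t i < L" if "i < L" for i using permutes_in_image[OF permutes_inv[OF t], of i] that by simp
  have tinv: "t (inv t i) = i" for i using permutes_inverses(1)[OF t] .
  have invt: "inv t (t i) = i" for i using permutes_inverses(2)[OF t] .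
  show ?thesis unfolding nfac_def
  proof (rule prod.reindex_bij_witness[where j = "\<lambda>(i, j). (t i, t j)" and i = "\<lambda>(i, j). (inv t i, inv t j)"])
    fix x assume x: "x \<in> Eset L (permute_list t y)"
    then obtain i j where e: "x = (i, j)" "i < j" "j < L" "y ! t i = y ! t j"
      by (auto simp: Eset_def pl)
    show "(case case x of (i, j) \<Rightarrow> (t i, t j) of (i, j) \<Rightarrow> (inv t i, inv t j)) = x"
      using e by (simp add: invt)
    show "(case x of (i, j) \<Rightarrow> (t i, t j)) \<in> Eset L y"
      using e ch[of i j] tL by (auto simp: Eset_def)
    show "(case case x of (i, j) \<Rightarrow> (t i, t j) of (i, j) \<Rightarrow> sq (y ! i) (\<zeta> i) (\<zeta> j)) =
          (case x of (i, j) \<Rightarrow> sq (permute_list t y ! i) ((\<zeta> \<circ> t) i) ((\<zeta> \<circ> t) j))"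
      using e by (simp add: pl)
  next
    fix x assume x: "x \<in> Eset L y"
    then obtain i j where e: "x = (i, j)" "i < j" "j < L" "y ! i = y ! j"
      by (auto simp: Eset_def)
    show "(case case x of (i, j) \<Rightarrow> (inv t i, inv t j) of (i, j) \<Rightarrow> (t i, t j)) = x"
      using e by (simp add: tinv)
    have "inv t i < inv t j"
    proof (rule ccontr)
      assume "\<not> inv t i < inv t j"
      moreover have "inv t i \<noteq> inv t j" using e(2) by (metis tinv less_irrefl)
      ultimately have "inv t j < inv t i" by simp
      then have "y ! t (inv t j) < y ! t (inv t i) \<or> (y ! t (inv t j) = y ! t (inv t i) \<and> t (inv t j) < t (inv t i))"
        using ch it e by auto
      then show False using e by (simp add: tinv)
    qed
    then show "(case x of (i, j) \<Rightarrow> (inv t i, inv t j)) \<in> Eset L (permute_list t y)"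
      using e it by (auto simp: Eset_def pl tinv)
  qed
qed

lemma Nij_eq:
  assumes "i < L" "j < L" "i \<noteq> j" "xs \<in> tuples N L" "zs \<in> tuples N L"
  shows "Nij L sq \<xi> i j xs zs = (if zs = xs then (if xs ! i = xs ! j then sq (xs ! i) (\<xi> i) (\<xi> j) else 1) else 0)"
proof (cases "zs = xs")
  case True then show ?thesis by (simp add: Nij_def emb_def)
next
  case False
  have "\<not> ((\<forall>m<L. m \<noteq> i \<longrightarrow> m \<noteq> j \<longrightarrow> xs ! m = zs ! m) \<and> zs ! i = xs ! i \<and> zs ! j = xs ! j)"
  proof
    assume a: "(\<forall>m<L. m \<noteq> i \<longrightarrow> m \<noteq> j \<longrightarrow> xs ! m = zs ! m) \<and> zs ! i = xs ! i \<and> zs ! j = xs ! j"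
    have "zs = xs" using assms(5,4)
    proof (rule tuples_eqI)
      fix m assume "m < L" then show "zs ! m = xs ! m" using a by (cases "m = i \<or> m = j") auto
    qed
    then show False using False by simp
  qed
  then show ?thesis using False unfolding Nij_def emb_def by auto
qed

lemma mprod_diag:
  assumes D: "\<forall>k\<in>set ks. \<forall>xs\<in>tuples N L. \<forall>zs\<in>tuples N L. D k xs zs = (if zs = xs then d k xs else 0)"
    and xs: "xs \<in> tuples N L" and zs: "zs \<in> tuples N L"
  shows "mprod N L (map D ks) xs zs = (if zs = xs then prod_list (map (\<lambda>k. d k xs) ks) else 0)"
  using D zs
proof (induction ks arbitrary: zs)
  case Nil then show ?case by (simp add: mprod_def idop_def)
next
  case (Cons k ks)
  have "mprod N L (map D (k # ks)) xs zs = mmul N L (D k) (mprod N L (map D ks)) xs zs"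
    by (simp add: mprod_def)
  also have "\<dots> = d k xs * mprod N L (map D ks) xs zs"
    unfolding mmul_def using Cons.prems xs
    by (subst sum_single[where z=xs]) auto
  also have "\<dots> = (if zs = xs then prod_list (map (\<lambda>k. d k xs) (k # ks)) else 0)"
    using Cons by simp
  finally show ?case .
qed

lemma Ncal_eq:
  assumes xs: "xs \<in> tuples N L" and zs: "zs \<in> tuples N L"
  shows "Ncal N L sq \<xi> xs zs = (if zs = xs then nfac L sq xs \<xi> else 0)"
proof -
  define nd where "nd i j ys = (if ys ! i = ys ! j then sq (ys ! i) (\<xi> i) (\<xi> j) else 1)" for i j and ys :: "nat list"
  define dr where "dr i ys = prod_list (map (\<lambda>j. nd i j ys) (rev [Suc i..<L]))" for i ys
  have row: "\<forall>xs\<in>tuples N L. \<forall>zs\<in>tuples N L. Nrow N L sq \<xi> i xs zs = (if zs = xs then dr i xs else 0)"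
    if "i < L" for i
  proof (intro ballI)
    fix xs zs assume "xs \<in> tuples N L" "zs \<in> tuples N L"
    then show "Nrow N L sq \<xi> i xs zs = (if zs = xs then dr i xs else 0)"
      unfolding Nrow_def dr_def using that
      by (subst mprod_diag[where d = "\<lambda>j. nd i j"]) (auto simp: Nij_eq nd_def)
  qed
  have "Ncal N L sq \<xi> xs zs = (if zs = xs then prod_list (map (\<lambda>i. dr i xs) (rev [0..<L - 1])) else 0)"
    unfolding Ncal_def using xs zs row
    by (subst mprod_diag[where d = dr]) auto
  also have "prod_list (map (\<lambda>i. dr i xs) (rev [0..<L - 1])) = nfac L sq xs \<xi>"
  proof -
    have c: "prod_list (map f (rev [p..<q])) = prod f {p..<q}" for f :: "nat \<Rightarrow> complex" and p q
      by (simp add: rev_map[symmetric] prod.distinct_set_conv_list[symmetric])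
    have "prod_list (map (\<lambda>i. dr i xs) (rev [0..<L - 1])) = (\<Prod>i\<in>{0..<L - 1}. \<Prod>j\<in>{Suc i..<L}. nd i j xs)"
      by (simp add: c dr_def)
    also have "\<dots> = prod (\<lambda>(i, j). nd i j xs) (SIGMA i:{0..<L - 1}. {Suc i..<L})"
      by (rule prod.Sigma) auto
    also have "(SIGMA i:{0..<L - 1}. {Suc i..<L}) = {(i, j). i < j \<and> j < L}" by auto
    also have "prod (\<lambda>(i, j). nd i j xs) {(i, j). i < j \<and> j < L} = nfac L sq xs \<xi>"
      unfolding nfac_def
    proof (rule prod.mono_neutral_cong_right)
      have "{(i, j). i < j \<and> j < L} \<subseteq> {..<L} \<times> {..<L}" by auto
      then show "finite {(i, j). i < j \<and> j < L}" by (rule finite_subset) auto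
    qed (auto simp: Eset_def nd_def split: if_splits)
    finally show ?thesis .
  qed
  finally show ?thesis .
qed

lemma mmul_proj:
  assumes "al \<in> tuples N L"
  shows "mmul N L (proj al) B xs ys = (if xs = al then B al ys else 0)"
  unfolding mmul_def proj_def using assms
  by (subst sum_single[where z=al]) auto

lemma Fcal_eq:
  assumes xs: "xs \<in> tuples N L" and r: "r permutes {0..<L}" "starcond L r xs"
  shows "Fcal N L a b c \<xi> xs ys = Rsig N L a b c \<xi> r xs ys"
proof -
  have inner: "(\<Sum>al\<in>{al \<in> tuples N L. starcond L s al}. mmul N L (proj al) (Rsig N L a b c \<xi> s) xs ys)
      = (if starcond L s xs then Rsig N L a b c \<xi> s xs ys else 0)" for s
  proof -
    have "(\<Sum>al\<in>{al \<in> tuples N L. starcond L s al}. mmul N L (proj al) (Rsig N L a b c \<xi> s) xs ys)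
        = (\<Sum>al\<in>{al \<in> tuples N L. starcond L s al}. if al = xs then Rsig N L a b c \<xi> s xs ys else 0)"
      by (rule sum.cong) (auto simp: mmul_proj)
    also have "\<dots> = (if starcond L s xs then Rsig N L a b c \<xi> s xs ys else 0)"
      using xs by (simp add: sum.delta')
    finally show ?thesis .
  qed
  have "Fcal N L a b c \<xi> xs ys = (\<Sum>s\<in>{s. s permutes {0..<L}}. if starcond L s xs then Rsig N L a b c \<xi> s xs ys else 0)"
    unfolding Fcal_def inner ..
  also have "\<dots> = Rsig N L a b c \<xi> r xs ys"
  proof (subst sum_single[where z=r])
    show "finite {s. s permutes {0..<L}}" by (rule finite_permutations) simp
    show "r \<in> {s. s permutes {0..<L}}" using r by simp
    fix s assume "s \<in> {s. s permutes {0..<L}}" "s \<noteq> r"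
    then show "(if starcond L s xs then Rsig N L a b c \<xi> s xs ys else 0) = 0"
      using starcond_unique[of s L r xs] r by auto
  qed (use r in simp)
  finally show ?thesis .
qed

lemma cl_eqD: "cl N L A = cl N L B \<Longrightarrow> xs \<in> tuples N L \<Longrightarrow> ys \<in> tuples N L \<Longrightarrow> A xs ys = B xs ys"
  by (drule fun_cong[of _ _ xs], drule fun_cong[of _ _ ys]) (simp add: cl_def)

lemma Fop_row:
  assumes unit: "\<And>x y. opeq N 2 (mmul N 2 (Rop a b c 2 0 1 x y) (Rop a b c 2 1 0 y x)) idop"
    and ybe: "\<And>x y z. opeq N 3
        (mmul N 3 (Rop a b c 3 0 1 x y) (mmul N 3 (Rop a b c 3 0 2 x z) (Rop a b c 3 1 2 y z)))
        (mmul N 3 (Rop a b c 3 1 2 y z) (mmul N 3 (Rop a b c 3 0 2 x z) (Rop a b c 3 0 1 x y)))"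
    and x: "x \<in> tuples N L" and zs: "zs \<in> tuples N L"
    and r: "r permutes {0..<L}" "starcond L r x"
  shows "Fop N L a b c sq \<zeta> x zs = nfac L sq x \<zeta> * hatprod N L a b c \<zeta> (canon L r) (permute_list r x) zs"
proof -
  have "Fop N L a b c sq \<zeta> x zs = nfac L sq x \<zeta> * Fcal N L a b c \<zeta> x zs"
    unfolding Fop_def mmul_def using x
    by (subst sum_single[where z=x]) (auto simp: Ncal_eq)
  also have "Fcal N L a b c \<zeta> x zs = Rsig N L a b c \<zeta> r x zs" by (rule Fcal_eq[OF x r])
  also have "\<dots> = hatprod N L a b c \<zeta> (min_decomp L r) (permute_list r x) zs"
    unfolding Rsig_def by (rule mmul_Pmat_left[OF x r(1)])
  also have "\<dots> = hatprod N L a b c \<zeta> (canon L r) (permute_list r x) zs"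
    by (rule cl_eqD[OF md_canon[OF unit ybe r(1)] pl_T[OF x r(1)] zs])
  finally show ?thesis .
qed

theorem mainTheorem1:
  fixes N L :: nat
    and a :: "nat \<Rightarrow> 'p \<Rightarrow> 'p \<Rightarrow> complex"
    and b c :: "nat \<Rightarrow> nat \<Rightarrow> 'p \<Rightarrow> 'p \<Rightarrow> complex"
    and sq :: "nat \<Rightarrow> 'p \<Rightarrow> 'p \<Rightarrow> complex"
    and \<xi> :: "nat \<Rightarrow> 'p"
    and \<sigma> :: "nat \<Rightarrow> nat"
  assumes hN: "N \<ge> 2" and hL: "L \<ge> 1"
    and a_nz: "\<And>k x y. k < N \<Longrightarrow> a k x y \<noteq> 0"
    and YBE: "\<And>x y z. opeq N 3
        (mmul N 3 (Rop a b c 3 0 1 x y) (mmul N 3 (Rop a b c 3 0 2 x z) (Rop a b c 3 1 2 y z)))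
        (mmul N 3 (Rop a b c 3 1 2 y z) (mmul N 3 (Rop a b c 3 0 2 x z) (Rop a b c 3 0 1 x y)))"
    and unitarity: "\<And>x y. opeq N 2 (mmul N 2 (Rop a b c 2 0 1 x y) (Rop a b c 2 1 0 y x)) idop"
    and sq_sq: "\<And>k x y. k < N \<Longrightarrow> (sq k x y)\<^sup>2 = a k x y"
    and sq_inv: "\<And>k x y. k < N \<Longrightarrow> sq k x y * sq k y x = 1"
    and h\<sigma>: "\<sigma> permutes {0..<L}"
  shows "opeq N L
           (mmul N L (relabel N L \<sigma> (Fop N L a b c sq (\<xi> \<circ> \<sigma>))) (Rsig N L a b c \<xi> \<sigma>))
           (Fop N L a b c sq \<xi>)"
  unfolding opeq_def
proof (intro ballI)
  fix xs ys assume xs: "xs \<in> tuples N L" and ys: "ys \<in> tuples N L"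
  have lx: "length xs = L" using xs by (simp add: tuplesD)
  have mdc: "cl N L (hatprod N L a b c \<zeta> (min_decomp L s)) = cl N L (hatprod N L a b c \<zeta> (canon L s))"
    if "s permutes {0..<L}" for s \<zeta> using md_canon[OF unitarity YBE that] .
  have grp: "cl N L (mmul N L (hatprod N L a b c (\<zeta> \<circ> s) (canon L t)) (hatprod N L a b c \<zeta> (canon L s)))
       = cl N L (hatprod N L a b c \<zeta> (canon L (s \<circ> t)))"
    if "s permutes {0..<L}" "t permutes {0..<L}" for s t \<zeta> using H_group[OF unitarity YBE that] .
  define u where "u = permute_list \<sigma> xs"
  have uT: "u \<in> tuples N L" unfolding u_def by (rule pl_T[OF xs h\<sigma>])
  have lu: "length u = L" using uT by (simp add: tuplesD)
  obtain t where tp: "t permutes {0..<L}" and ts: "starcond L t u" using starcond_exists[OF lu] by blast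
  obtain r where rp: "r permutes {0..<L}" and rs: "starcond L r xs" using starcond_exists[OF lx] by blast
  define g where "g = permute_list r xs"
  have gT: "g \<in> tuples N L" unfolding g_def by (rule pl_T[OF xs rp])
  have lg: "length g = L" using gT by (simp add: tuplesD)
  have st: "s permutes {..<length xs}" if "s permutes {0..<L}" for s using that lx by (simp add: lessThan_atLeast0)
  have tu: "permute_list t u = permute_list (\<sigma> \<circ> t) xs" unfolding u_def by (rule pl_pl[OF h\<sigma> tp lx])
  have stp: "\<sigma> \<circ> t permutes {0..<L}" by (rule permutes_compose[OF tp h\<sigma>])
  have gsort: "sorted g" unfolding g_def by (rule starcond_sorted[OF rs rp lx])
  have g'eq: "permute_list t u = g"
  proof -
    have "sort xs = permute_list t u"
      by (rule properties_for_sort) (auto simp: tu mset_permute_list[OF st[OF stp]] intro: starcond_sorted[OF ts tp lu, unfolded tu])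
    moreover have "sort xs = g"
      by (rule properties_for_sort) (auto simp: g_def mset_permute_list[OF st[OF rp]] gsort[unfolded g_def])
    ultimately show ?thesis by simp
  qed
  define p where "p = inv r \<circ> \<sigma> \<circ> t"
  have pp: "p permutes {0..<L}" unfolding p_def
    by (intro permutes_compose[OF tp] permutes_compose[OF h\<sigma>] permutes_inv[OF rp])
  have rp_eq: "r \<circ> p = \<sigma> \<circ> t" by (simp add: fun_eq_iff p_def permutes_inverses(1)[OF rp])
  have gp: "g ! p i = g ! i" if "i < L" for i
  proof -
    have "permute_list p g = permute_list (r \<circ> p) xs" unfolding g_def by (rule pl_pl[OF rp pp lx])
    also have "\<dots> = g" using g'eq tu rp_eq by simp
    finally have "permute_list p g ! i = g ! i" by simp
    then show ?thesis using that lg by (simp add: permute_list_def)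
  qed
  have mono: "\<forall>i j. i \<le> j \<longrightarrow> j < L \<longrightarrow> g ! i \<le> g ! j"
    using gsort lg by (simp add: sorted_iff_nth_mono)
  have flat: "\<forall>i\<in>set (canon L p). g ! i = g ! Suc i"
    using canon_flat[of L L p g] pp gp mono by simp
  have w: "\<forall>i\<in>set (canon L p). Suc i < L \<and> g ! i = g ! Suc i"
    using flat canon_valid[of L p] by simp
  have row: "nfac L sq g ((\<xi> \<circ> r) \<circ> p) * hatprod N L a b c (\<xi> \<circ> r) (canon L p) g zs
      = (if zs = g then nfac L sq g (\<xi> \<circ> r) else 0)" if "zs \<in> tuples N L" for zs
    using hatprod_flat[where \<zeta>="\<xi> \<circ> r" and a=a and b=b and c=c and sq=sq, OF gT that w sq_sq sq_inv] perm_canon[OF pp] by simp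
  have n1: "nfac L sq u (\<xi> \<circ> \<sigma>) = nfac L sq g ((\<xi> \<circ> r) \<circ> p)"
  proof -
    have "nfac L sq u (\<xi> \<circ> \<sigma>) = nfac L sq (permute_list t u) ((\<xi> \<circ> \<sigma>) \<circ> t)"
      by (rule nstable[OF tp ts lu, symmetric])
    also have "(\<xi> \<circ> \<sigma>) \<circ> t = (\<xi> \<circ> r) \<circ> p" using rp_eq by (simp add: comp_assoc)
    finally show ?thesis using g'eq by (simp add: comp_def)
  qed
  have n2: "nfac L sq xs \<xi> = nfac L sq g (\<xi> \<circ> r)"
    unfolding g_def by (rule nstable[OF rp rs lx, symmetric])
  have RHS: "Fop N L a b c sq \<xi> xs ys = nfac L sq xs \<xi> * hatprod N L a b c \<xi> (canon L r) g ys"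
    unfolding g_def by (rule Fop_row[OF unitarity YBE xs ys rp rs])
  let ?X = "Fop N L a b c sq (\<xi> \<circ> \<sigma>)"
  let ?Hm = "hatprod N L a b c \<xi> (min_decomp L \<sigma>)"
  let ?Hs = "hatprod N L a b c \<xi> (canon L \<sigma>)"
  have isp: "inv \<sigma> permutes {0..<L}" by (rule permutes_inv[OF h\<sigma>])
  have L1: "mmul N L (relabel N L \<sigma> ?X) (Rsig N L a b c \<xi> \<sigma>) xs ys = mmul N L ?X ?Hs u ys"
  proof -
    have "mmul N L (relabel N L \<sigma> ?X) (Rsig N L a b c \<xi> \<sigma>)
        = mmul N L (Pmat L \<sigma>) (mmul N L ?X (mmul N L (Pmat L (inv \<sigma>)) (mmul N L (Pmat L \<sigma>) ?Hm)))"
      unfolding relabel_def Rsig_def by (simp add: mmul_assoc)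
    then have "mmul N L (relabel N L \<sigma> ?X) (Rsig N L a b c \<xi> \<sigma>) xs ys
        = mmul N L ?X (mmul N L (Pmat L (inv \<sigma>)) (mmul N L (Pmat L \<sigma>) ?Hm)) u ys"
      by (simp add: mmul_Pmat_left[OF xs h\<sigma>] u_def)
    also have "\<dots> = mmul N L ?X ?Hs u ys"
    proof (rule mmul_congT)
      fix zs assume zs: "zs \<in> tuples N L"
      have lz: "length zs = L" using zs by (simp add: tuplesD)
      have "mmul N L (Pmat L (inv \<sigma>)) (mmul N L (Pmat L \<sigma>) ?Hm) zs ys
          = ?Hm (permute_list \<sigma> (permute_list (inv \<sigma>) zs)) ys"
        by (simp add: mmul_Pmat_left[OF zs isp] mmul_Pmat_left[OF pl_T[OF zs isp] h\<sigma>])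
      also have "\<dots> = ?Hm zs ys" by (simp add: pl_inv_pl[OF h\<sigma> lz])
      also have "\<dots> = ?Hs zs ys" by (rule cl_eqD[OF mdc[OF h\<sigma>] zs ys])
      finally show "mmul N L (Pmat L (inv \<sigma>)) (mmul N L (Pmat L \<sigma>) ?Hm) zs ys = ?Hs zs ys" .
    qed simp
    finally show ?thesis .
  qed
  have L2: "mmul N L ?X ?Hs u ys = nfac L sq u (\<xi> \<circ> \<sigma>) * hatprod N L a b c \<xi> (canon L (\<sigma> \<circ> t)) g ys"
  proof -
    have "mmul N L ?X ?Hs u ys = (\<Sum>zs\<in>tuples N L. nfac L sq u (\<xi> \<circ> \<sigma>) *
          (hatprod N L a b c (\<xi> \<circ> \<sigma>) (canon L t) g zs * ?Hs zs ys))"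
      unfolding mmul_def
      by (rule sum.cong) (simp_all add: Fop_row[OF unitarity YBE uT _ tp ts] g'eq)
    also have "\<dots> = nfac L sq u (\<xi> \<circ> \<sigma>) * mmul N L (hatprod N L a b c (\<xi> \<circ> \<sigma>) (canon L t)) ?Hs g ys"
      by (simp add: mmul_def sum_distrib_left)
    also have "mmul N L (hatprod N L a b c (\<xi> \<circ> \<sigma>) (canon L t)) ?Hs g ys = hatprod N L a b c \<xi> (canon L (\<sigma> \<circ> t)) g ys"
      by (rule cl_eqD[OF grp[OF h\<sigma> tp] gT ys])
    finally show ?thesis .
  qed
  have L3: "hatprod N L a b c \<xi> (canon L (\<sigma> \<circ> t)) g ys
      = (\<Sum>zs\<in>tuples N L. hatprod N L a b c (\<xi> \<circ> r) (canon L p) g zs * hatprod N L a b c \<xi> (canon L r) zs ys)"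
    using cl_eqD[OF grp[OF rp pp] gT ys] rp_eq by (simp add: mmul_def)
  have "mmul N L (relabel N L \<sigma> ?X) (Rsig N L a b c \<xi> \<sigma>) xs ys
      = (\<Sum>zs\<in>tuples N L. (nfac L sq g ((\<xi> \<circ> r) \<circ> p) * hatprod N L a b c (\<xi> \<circ> r) (canon L p) g zs)
          * hatprod N L a b c \<xi> (canon L r) zs ys)"
    unfolding L1 L2 L3 n1 by (simp add: sum_distrib_left mult.assoc)
  also have "\<dots> = (\<Sum>zs\<in>tuples N L. (if zs = g then nfac L sq g (\<xi> \<circ> r) else 0) * hatprod N L a b c \<xi> (canon L r) zs ys)"
    by (rule sum.cong) (simp_all add: row)
  also have "\<dots> = nfac L sq g (\<xi> \<circ> r) * hatprod N L a b c \<xi> (canon L r) g ys"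
    using gT by (subst sum_single[where z=g]) simp_all
  also have "\<dots> = Fop N L a b c sq \<xi> xs ys" unfolding RHS n2 ..
  finally show "mmul N L (relabel N L \<sigma> ?X) (Rsig N L a b c \<xi> \<sigma>) xs ys = Fop N L a b c sq \<xi> xs ys" .
qed

end
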